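(* Let $(\Omega,\mu)$ be a measure space, $E\subset\Omega$ with $0<\mu E<\infty$, and let $(v_k)_{k\ge1}$ be a sequence in $L^2_{\mathbb R}(\Omega,\mu)$ with $\sum_{k\ge1}|v_k(x)|^2\le M^2$ for all $x\in E$, for some constant $M$. Let $(u_k)_{k\ge1}$ be a frame in $L^2_{\mathbb R}(\Omega,\mu)$. Then the operator $Uf=\sum_{k\ge1}(f,v_k)u_k$, acting $L^2(E,\mu)\to L^2_{\mathbb R}(\Omega,\mu)$, its adjoint $U^*f=\sum_{k\ge1}(f,u_k)v_k$, and the operator $U'f=\sum_{k\ge1}(f,v_k)v_k|_E$, acting $L^2(E,\mu)\to L^2_{\mathbb R}(E,\mu)$, are all compact.
   Context: A sequence $(u_k)_{k\ge1}$ in $L^2_{\mathbb R}(\Omega,\mu)$ is a frame if there exist constants $A>0$, $B>0$ with $A\|f\|^2\le\sum_{k\ge1}|(f,u_k)|^2\le B\|f\|^2$ for all $f$. Functions in $L^2(E,\mu)$ are regarded as functions on $\Omega$ vanishing outside $E$, and $(f,g)=\int fg\,d\mu$. *)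

theory Defs
  imports "HOL-Analysis.Analysis"
begin

text \<open>Real L2 space of a measure space (functions as representatives).\<close>
definition L2 :: "'a measure \<Rightarrow> ('a \<Rightarrow> real) set" where
  "L2 M = {f. f \<in> borel_measurable M \<and> integrable M (\<lambda>x. (f x)^2)}"

text \<open>L2(E): square-integrable functions on Omega vanishing outside E.\<close>
definition L2_on :: "'a measure \<Rightarrow> 'a set \<Rightarrow> ('a \<Rightarrow> real) set" where
  "L2_on M E = {f \<in> L2 M. \<forall>x\<in>space M - E. f x = 0}"

definition L2_inner :: "'a measure \<Rightarrow> ('a \<Rightarrow> real) \<Rightarrow> ('a \<Rightarrow> real) \<Rightarrow> real" where
  "L2_inner M f g = (\<integral>x. f x * g x \<partial>M)"

definition L2_norm :: "'a measure \<Rightarrow> ('a \<Rightarrow> real) \<Rightarrow> real" where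
  "L2_norm M f = sqrt (\<integral>x. (f x)^2 \<partial>M)"

definition is_frame :: "'a measure \<Rightarrow> (nat \<Rightarrow> 'a \<Rightarrow> real) \<Rightarrow> bool" where
  "is_frame M u \<longleftrightarrow> (\<forall>k. u k \<in> L2 M) \<and>
     (\<exists>A>0. \<exists>B>0. \<forall>f\<in>L2 M. summable (\<lambda>k. (L2_inner M f (u k))^2) \<and>
        A * (L2_norm M f)^2 \<le> (\<Sum>k. (L2_inner M f (u k))^2) \<and>
        (\<Sum>k. (L2_inner M f (u k))^2) \<le> B * (L2_norm M f)^2)"

definition L2_series_conv ::
  "'a measure \<Rightarrow> (nat \<Rightarrow> real) \<Rightarrow> (nat \<Rightarrow> 'a \<Rightarrow> real) \<Rightarrow> ('a \<Rightarrow> real) \<Rightarrow> bool" where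
  "L2_series_conv M c g h \<longleftrightarrow> h \<in> L2 M \<and>
     (\<lambda>n. L2_norm M (\<lambda>x. (\<Sum>k<n. c k * g k x) - h x)) \<longlonglongrightarrow> 0"

text \<open>The operator f \<mapsto> sum_k (c f)_k g_k is well defined from D into Tgt (series converging
  in L2) and compact: images of norm-bounded sequences have L2-convergent subsequences.\<close>
definition compact_series_op ::
  "'a measure \<Rightarrow> ('a \<Rightarrow> real) set \<Rightarrow> ('a \<Rightarrow> real) set \<Rightarrow>
   (('a \<Rightarrow> real) \<Rightarrow> nat \<Rightarrow> real) \<Rightarrow> (nat \<Rightarrow> 'a \<Rightarrow> real) \<Rightarrow> bool" where
  "compact_series_op M D Tgt c g \<longleftrightarrow>
     (\<exists>T. (\<forall>f\<in>D. T f \<in> Tgt \<and> L2_series_conv M (c f) g (T f)) \<and>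
          (\<forall>(F::nat \<Rightarrow> 'a \<Rightarrow> real) (B::real). (\<forall>n. F n \<in> D \<and> L2_norm M (F n) \<le> B) \<longrightarrow>
             (\<exists>r l. strict_mono r \<and> l \<in> Tgt \<and>
                (\<lambda>n. L2_norm M (\<lambda>x. T (F (r n)) x - l x)) \<longlonglongrightarrow> 0)))"

end

theory Submission
  imports Defs "HOL-Library.Diagonal_Subsequence"
begin

lemma L2_D: "f \<in> L2 M \<Longrightarrow> f \<in> borel_measurable M"
  "f \<in> L2 M \<Longrightarrow> integrable M (\<lambda>x. (f x)^2)"
  by (auto simp: L2_def)

lemma L2_I: "f \<in> borel_measurable M \<Longrightarrow> integrable M (\<lambda>x. (f x)^2) \<Longrightarrow> f \<in> L2 M"
  by (auto simp: L2_def)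

lemma two_abs_le: "2 * \<bar>a * b\<bar> \<le> a^2 + (b::real)^2"
proof -
  have "0 \<le> (\<bar>a\<bar> - \<bar>b\<bar>)^2" by simp
  then show ?thesis by (simp add: power2_diff abs_mult)
qed

lemma L2_prod_integrable:
  assumes "f \<in> L2 M" "g \<in> L2 M"
  shows "integrable M (\<lambda>x. f x * g x)"
proof (rule Bochner_Integration.integrable_bound[where f="\<lambda>x. (f x)^2 + (g x)^2"])
  show "integrable M (\<lambda>x. (f x)^2 + (g x)^2)" using assms by (auto simp: L2_def)
  show "(\<lambda>x. f x * g x) \<in> borel_measurable M" using assms by (auto simp: L2_def)
  show "AE x in M. norm (f x * g x) \<le> norm ((f x)^2 + (g x)^2)"
  proof (rule AE_I2)
    fix x
    have "2 * \<bar>f x * g x\<bar> \<le> (f x)^2 + (g x)^2" by (rule two_abs_le)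
    then show "norm (f x * g x) \<le> norm ((f x)^2 + (g x)^2)" by simp
  qed
qed

lemma L2_add: assumes "f \<in> L2 M" "g \<in> L2 M" shows "(\<lambda>x. f x + g x) \<in> L2 M"
proof (rule L2_I)
  show "(\<lambda>x. f x + g x) \<in> borel_measurable M" using assms by (auto simp: L2_def)
  have "integrable M (\<lambda>x. (f x)^2 + (g x)^2 + 2 * (f x * g x))"
    using assms L2_prod_integrable[OF assms] by (auto simp: L2_def)
  then show "integrable M (\<lambda>x. (f x + g x)^2)" by (simp add: power2_sum mult.assoc)
qed

lemma L2_cmult: assumes "f \<in> L2 M" shows "(\<lambda>x. c * f x) \<in> L2 M"
proof (rule L2_I)
  show "(\<lambda>x. c * f x) \<in> borel_measurable M" using assms by (auto simp: L2_def)
  have "integrable M (\<lambda>x. c^2 * (f x)^2)"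
    using assms by (auto simp: L2_def)
  then show "integrable M (\<lambda>x. (c * f x)^2)" by (simp add: power_mult_distrib)
qed

lemma L2_diff: assumes "f \<in> L2 M" "g \<in> L2 M" shows "(\<lambda>x. f x - g x) \<in> L2 M"
  using L2_add[OF assms(1) L2_cmult[OF assms(2), of "-1"]] by simp

lemma L2_zero: "(\<lambda>x. 0) \<in> L2 M"
  by (rule L2_I) auto

lemma L2_sum: assumes "\<And>i. i \<in> I \<Longrightarrow> f i \<in> L2 M" shows "(\<lambda>x. \<Sum>i\<in>I. f i x) \<in> L2 M"
  using assms
proof (induction I rule: infinite_finite_induct)
  case (infinite A) then show ?case using L2_zero by simp
next
  case empty then show ?case using L2_zero by simp
next
  case (insert i A)
  then show ?case using L2_add[of "f i" M "\<lambda>x. \<Sum>i\<in>A. f i x"] by simp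
qed

lemma L2_mult_bounded:
  assumes "f \<in> L2 M" "g \<in> borel_measurable M" "\<And>x. \<bar>g x\<bar> \<le> K"
  shows "(\<lambda>x. g x * f x) \<in> L2 M"
proof (rule L2_I)
  show "(\<lambda>x. g x * f x) \<in> borel_measurable M" using assms by (auto simp: L2_def)
  show "integrable M (\<lambda>x. (g x * f x)^2)"
  proof (rule Bochner_Integration.integrable_bound[where f="\<lambda>x. K^2 * (f x)^2"])
    show "integrable M (\<lambda>x. K^2 * (f x)^2)" using assms by (auto simp: L2_def)
    show "(\<lambda>x. (g x * f x)^2) \<in> borel_measurable M" using assms by (auto simp: L2_def)
    show "AE x in M. norm ((g x * f x)^2) \<le> norm (K^2 * (f x)^2)"
    proof (rule AE_I2)
      fix x
      have "(g x)^2 \<le> K^2" using assms(3)[of x]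
        by (metis abs_le_square_iff abs_of_nonneg abs_ge_zero order_trans)
      then have "(g x)^2 * (f x)^2 \<le> K^2 * (f x)^2" by (rule mult_right_mono) simp
      then show "norm ((g x * f x)^2) \<le> norm (K^2 * (f x)^2)" by (simp add: power_mult_distrib)
    qed
  qed
qed

lemma L2_indicator: assumes "f \<in> L2 M" "E \<in> sets M" shows "(\<lambda>x. indicator E x * f x) \<in> L2 M"
  by (rule L2_mult_bounded[OF assms(1), where K=1]) (use assms in \<open>auto simp: indicator_def\<close>)

lemma L2_norm_nonneg: "0 \<le> L2_norm M f"
  unfolding L2_norm_def by simp

lemma L2_int_nonneg: "0 \<le> (\<integral>x. ((f x)::real)^2 \<partial>M)"
  by (rule integral_nonneg_AE) auto

lemma L2_norm_sq: "(L2_norm M f)^2 = (\<integral>x. (f x)^2 \<partial>M)"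
  unfolding L2_norm_def using L2_int_nonneg by simp

lemma L2_inner_self: "L2_inner M f f = (L2_norm M f)^2"
  unfolding L2_inner_def L2_norm_sq by (simp add: power2_eq_square)

lemma cs_aux:
  fixes a b I :: real
  assumes a: "a \<ge> 0" and b: "b \<ge> 0" and h: "\<And>t. t > 0 \<Longrightarrow> 2 * \<bar>I\<bar> \<le> t * a^2 + b^2 / t"
  shows "\<bar>I\<bar> \<le> a * b"
proof (cases "a > 0 \<and> b > 0")
  case True
  have "2 * \<bar>I\<bar> \<le> (b/a) * a^2 + b^2 / (b/a)" using h[of "b/a"] True by simp
  also have "\<dots> = 2 * (a * b)" using True by (simp add: power2_eq_square field_simps)
  finally show ?thesis by simp
next
  case False
  show ?thesis
  proof (rule ccontr)
    assume "\<not> ?thesis"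
    then have I: "\<bar>I\<bar> > 0" using a b by (smt (verit) mult_nonneg_nonneg)
    show False
    proof (cases "a = 0")
      case True
      define t where "t = (b^2 + 1) / \<bar>I\<bar>"
      have t: "t > 0" unfolding t_def using I by (auto intro!: divide_pos_pos add_nonneg_pos)
      have "2 * \<bar>I\<bar> \<le> b^2 / t" using h[OF t] True by simp
      also have "\<dots> = b^2 * \<bar>I\<bar> / (b^2 + 1)" by (simp add: t_def)
      also have "\<dots> \<le> \<bar>I\<bar>" using I by (simp add: divide_le_eq add_pos_nonneg add_nonneg_pos)
      finally show False using I by simp
    next
      case False
      then have b0: "b = 0" using \<open>\<not> (a > 0 \<and> b > 0)\<close> a b by simp
      define t where "t = \<bar>I\<bar> / (a^2 + 1)"
      have t: "t > 0" unfolding t_def using I by (auto intro!: divide_pos_pos add_nonneg_pos)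
      have "2 * \<bar>I\<bar> \<le> t * a^2" using h[OF t] b0 by simp
      also have "\<dots> = \<bar>I\<bar> * a^2 / (a^2 + 1)" by (simp add: t_def)
      also have "\<dots> \<le> \<bar>I\<bar>" using I by (simp add: divide_le_eq add_pos_nonneg add_nonneg_pos)
      finally show False using I by simp
    qed
  qed
qed

lemma L2_CS:
  assumes f: "f \<in> L2 M" and g: "g \<in> L2 M"
  shows "\<bar>L2_inner M f g\<bar> \<le> L2_norm M f * L2_norm M g"
proof (rule cs_aux[OF L2_norm_nonneg L2_norm_nonneg])
  fix t :: real assume t: "t > 0"
  have pt: "2 * \<bar>f x * g x\<bar> \<le> t * (f x)^2 + (g x)^2 / t" for x
  proof -
    have "2 * \<bar>(t * f x) * g x\<bar> \<le> (t * f x)^2 + (g x)^2" by (rule two_abs_le)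
    then have "t * (2 * \<bar>f x * g x\<bar>) \<le> t * (t * (f x)^2 + (g x)^2 / t)"
      using t by (simp add: abs_mult power_mult_distrib power2_eq_square algebra_simps)
    then show ?thesis using t by simp
  qed
  have i1: "integrable M (\<lambda>x. f x * g x)" by (rule L2_prod_integrable[OF f g])
  have "2 * \<bar>L2_inner M f g\<bar> \<le> 2 * (\<integral>x. \<bar>f x * g x\<bar> \<partial>M)"
    unfolding L2_inner_def using integral_abs_bound[of M "\<lambda>x. f x * g x"] by simp
  also have "\<dots> = (\<integral>x. 2 * \<bar>f x * g x\<bar> \<partial>M)" by simp
  also have "\<dots> \<le> (\<integral>x. t * (f x)^2 + (g x)^2 / t \<partial>M)"
    by (rule integral_mono) (use i1 f g pt in \<open>auto simp: L2_def\<close>)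
  also have "\<dots> = t * (\<integral>x. (f x)^2 \<partial>M) + (\<integral>x. (g x)^2 \<partial>M) / t"
    using f g by (simp add: L2_def)
  also have "\<dots> = t * (L2_norm M f)^2 + (L2_norm M g)^2 / t" by (simp add: L2_norm_sq)
  finally show "2 * \<bar>L2_inner M f g\<bar> \<le> t * (L2_norm M f)^2 + (L2_norm M g)^2 / t" .
qed

lemma L2_norm_le:
  assumes "c \<ge> 0" "(\<integral>x. (f x)^2 \<partial>M) \<le> c^2" shows "L2_norm M f \<le> c"
  unfolding L2_norm_def using assms real_sqrt_le_mono[OF assms(2)] by simp

lemma L2_norm_add:
  assumes f: "f \<in> L2 M" and g: "g \<in> L2 M"
  shows "L2_norm M (\<lambda>x. f x + g x) \<le> L2_norm M f + L2_norm M g"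
proof (rule L2_norm_le)
  show "0 \<le> L2_norm M f + L2_norm M g" by (intro add_nonneg_nonneg L2_norm_nonneg)
  have "(\<integral>x. (f x + g x)^2 \<partial>M) = (\<integral>x. (f x)^2 + 2 * (f x * g x) + (g x)^2 \<partial>M)"
    by (intro Bochner_Integration.integral_cong) (auto simp: power2_sum algebra_simps)
  also have "\<dots> = (\<integral>x. (f x)^2 \<partial>M) + 2 * L2_inner M f g + (\<integral>x. (g x)^2 \<partial>M)"
    using f g L2_prod_integrable[OF f g] by (simp add: L2_def L2_inner_def)
  also have "\<dots> \<le> (L2_norm M f)^2 + 2 * (L2_norm M f * L2_norm M g) + (L2_norm M g)^2"
    using L2_CS[OF f g] by (simp add: L2_norm_sq)
  also have "\<dots> = (L2_norm M f + L2_norm M g)^2" by (simp add: power2_sum)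
  finally show "(\<integral>x. (f x + g x)^2 \<partial>M) \<le> (L2_norm M f + L2_norm M g)^2" .
qed

lemma L2_norm_cmult: "L2_norm M (\<lambda>x. c * f x) = \<bar>c\<bar> * L2_norm M f"
  unfolding L2_norm_def by (simp add: power_mult_distrib real_sqrt_mult)

lemma L2_norm_minus_commute: "L2_norm M (\<lambda>x. f x - g x) = L2_norm M (\<lambda>x. g x - f x)"
  unfolding L2_norm_def by (simp add: power2_commute)

lemma L2_norm_tri:
  assumes "f \<in> L2 M" "g \<in> L2 M" "h \<in> L2 M"
  shows "L2_norm M (\<lambda>x. f x - h x) \<le> L2_norm M (\<lambda>x. f x - g x) + L2_norm M (\<lambda>x. g x - h x)"
  using L2_norm_add[OF L2_diff[OF assms(1,2)] L2_diff[OF assms(2,3)]] by simp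

lemma L2_inner_diff:
  assumes "f \<in> L2 M" "g \<in> L2 M" "h \<in> L2 M"
  shows "L2_inner M (\<lambda>x. f x - g x) h = L2_inner M f h - L2_inner M g h"
  unfolding L2_inner_def using L2_prod_integrable[OF assms(1,3)] L2_prod_integrable[OF assms(2,3)]
  by (simp add: left_diff_distrib)

lemma L2_inner_cmult: "L2_inner M (\<lambda>x. c * f x) h = c * L2_inner M f h"
  unfolding L2_inner_def by (simp add: mult.assoc)

lemma L2_inner_sum:
  assumes "\<And>i. i \<in> I \<Longrightarrow> f i \<in> L2 M" "h \<in> L2 M"
  shows "L2_inner M (\<lambda>x. \<Sum>i\<in>I. f i x) h = (\<Sum>i\<in>I. L2_inner M (f i) h)"
  unfolding L2_inner_def sum_distrib_right using assms L2_prod_integrable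
  by (subst Bochner_Integration.integral_sum) auto

lemma L2_inner_commute: "L2_inner M f g = L2_inner M g f"
  unfolding L2_inner_def by (simp add: mult.commute)

lemma two_abs_le_t:
  fixes a b t :: real assumes t: "t > 0"
  shows "2 * \<bar>a * b\<bar> \<le> t * a^2 + b^2 / t"
proof -
  have "2 * \<bar>(t * a) * b\<bar> \<le> (t * a)^2 + b^2" by (rule two_abs_le)
  then have "t * (2 * \<bar>a * b\<bar>) \<le> t * (t * a^2 + b^2 / t)"
    using t by (simp add: abs_mult power_mult_distrib power2_eq_square algebra_simps)
  then show ?thesis using t by simp
qed

lemma L2_sq_integral_eq:
  assumes "f \<in> L2 M"
  shows "(\<integral>\<^sup>+x. ennreal ((f x)^2) \<partial>M) = ennreal ((L2_norm M f)^2)"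
  unfolding L2_norm_sq using assms
  by (intro nn_integral_eq_integral) (auto simp: L2_def)

lemma L2_complete:
  fixes s :: "nat \<Rightarrow> 'a \<Rightarrow> real"
  assumes s: "\<And>n. s n \<in> L2 M"
    and C: "\<And>e. e > 0 \<Longrightarrow> \<exists>N. \<forall>m\<ge>N. \<forall>n\<ge>N. L2_norm M (\<lambda>x. s m x - s n x) < e"
  shows "\<exists>h\<in>L2 M. (\<lambda>n. L2_norm M (\<lambda>x. s n x - h x)) \<longlonglongrightarrow> 0"
proof -
  have smeas[measurable]: "\<And>n. s n \<in> borel_measurable M" using s by (auto simp: L2_def)
  have "\<exists>r. \<forall>n. (\<forall>i\<ge>r n. \<forall>j\<ge>r n. L2_norm M (\<lambda>x. s i x - s j x) < (1/4)^n) \<and> r (Suc n) > r n"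
  proof (intro dependent_nat_choice, goal_cases)
    case 1
    then show ?case using C[of 1] by auto
  next
    case (2 x n)
    obtain N where N: "\<forall>i\<ge>N. \<forall>j\<ge>N. L2_norm M (\<lambda>y. s i y - s j y) < (1/4)^Suc n"
      using C[of "(1/4)^Suc n"] by auto
    show ?case
      by (rule exI[of _ "max N (Suc x)"]) (use N in auto)
  qed
  then obtain r where rC: "\<And>n i j. i \<ge> r n \<Longrightarrow> j \<ge> r n \<Longrightarrow> L2_norm M (\<lambda>x. s i x - s j x) < (1/4)^n"
    and rS: "\<And>n. r (Suc n) > r n" by blast
  have r: "strict_mono r" using rS by (simp add: strict_mono_Suc_iff)
  define d where "d j x = s (r (Suc j)) x - s (r j) x" for j x
  have dL2: "d j \<in> L2 M" for j unfolding d_def using s by (intro L2_diff)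
  have dnorm: "L2_norm M (d j) < (1/4)^j" for j
    unfolding d_def using rC[of j "r (Suc j)" "r j"] rS[of j] by simp
  have dint: "(\<integral>\<^sup>+x. ennreal (2^j * (d j x)^2) \<partial>M) \<le> ennreal ((1/8)^j)" for j
  proof -
    have "(\<integral>\<^sup>+x. ennreal (2^j * (d j x)^2) \<partial>M) = (\<integral>\<^sup>+x. ennreal (2^j) * ennreal ((d j x)^2) \<partial>M)"
      by (simp add: ennreal_mult)
    also have "\<dots> = ennreal (2^j) * (\<integral>\<^sup>+x. ennreal ((d j x)^2) \<partial>M)"
      using dL2[of j] by (intro nn_integral_cmult) (auto simp: L2_def)
    also have "\<dots> = ennreal (2^j * (L2_norm M (d j))^2)"
      using L2_sq_integral_eq[OF dL2[of j]] by (simp add: ennreal_mult)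
    also have "\<dots> \<le> ennreal (2^j * ((1/4)^j)^2)"
      using dnorm[of j] L2_norm_nonneg[of M "d j"]
      by (intro ennreal_leI mult_left_mono power_mono) auto
    also have "2^j * ((1/4::real)^j)^2 = (1/8)^j"
      by (simp add: power2_eq_square power_mult_distrib[symmetric])
    finally show ?thesis .
  qed
  define W where "W x = (\<Sum>j. ennreal (2^j * (d j x)^2))" for x
  have dmeas[measurable]: "d j \<in> borel_measurable M" for j using dL2 by (auto simp: L2_def)
  have Wmeas: "W \<in> borel_measurable M" unfolding W_def by measurable
  have "(\<integral>\<^sup>+x. W x \<partial>M) = (\<Sum>j. (\<integral>\<^sup>+x. ennreal (2^j * (d j x)^2) \<partial>M))"
    unfolding W_def by (intro nn_integral_suminf) measurable
  also have "\<dots> \<le> (\<Sum>j. ennreal ((1/8)^j))"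
    by (intro suminf_le dint) auto
  also have "\<dots> = ennreal (\<Sum>j. (1/8::real)^j)"
    by (intro suminf_ennreal2) auto
  also have "\<dots> < \<infinity>" by simp
  finally have "(\<integral>\<^sup>+x. W x \<partial>M) < \<infinity>" .
  then have "AE x in M. W x < \<infinity>"
    by (intro finite_nn_integral_imp_ae_finite Wmeas)
  moreover have "convergent (\<lambda>j. s (r j) x)" if "W x < \<infinity>" for x
  proof -
    have "summable (\<lambda>j. 2^j * (d j x)^2)"
      using that unfolding W_def by (intro summable_suminf_not_top) auto
    moreover have "summable (\<lambda>j. (1/2::real)^j)" by (rule summable_geometric) simp
    ultimately have "summable (\<lambda>j. (2^j * (d j x)^2 + (1/2)^j) / 2)"
      by (intro summable_divide summable_add)
    moreover have "norm (d j x) \<le> (2^j * (d j x)^2 + (1/2)^j) / 2" for j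
    proof -
      have "2 * \<bar>d j x * 1\<bar> \<le> 2^j * (d j x)^2 + 1^2 / 2^j"
        by (rule two_abs_le_t) simp
      then show ?thesis by (simp add: power_one_over)
    qed
    ultimately have "summable (\<lambda>j. d j x)"
      by (rule summable_comparison_test'[where N=0])
    then have "(\<lambda>n. \<Sum>j<n. d j x) \<longlonglongrightarrow> (\<Sum>j. d j x)" by (rule summable_LIMSEQ)
    moreover have "(\<Sum>j<n. d j x) = s (r n) x - s (r 0) x" for n
      unfolding d_def by (rule sum_lessThan_telescope)
    ultimately have "(\<lambda>n. s (r n) x - s (r 0) x + s (r 0) x) \<longlonglongrightarrow> (\<Sum>j. d j x) + s (r 0) x"
      by (intro tendsto_add) auto
    then show ?thesis by (auto simp: convergent_def)
  qed
  ultimately have ae: "AE x in M. convergent (\<lambda>j. s (r j) x)" by auto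
  define h where "h x = lim (\<lambda>j. s (r j) x)" for x
  have hmeas[measurable]: "h \<in> borel_measurable M" unfolding h_def by measurable
  have aelim: "AE x in M. (\<lambda>j. s (r j) x) \<longlonglongrightarrow> h x"
    using ae unfolding h_def by (auto simp: convergent_LIMSEQ_iff)
  have key: "(\<integral>\<^sup>+x. ennreal ((s n x - h x)^2) \<partial>M) \<le> ennreal (e^2)"
    if e: "e > 0" and N: "\<forall>m\<ge>N. \<forall>n\<ge>N. L2_norm M (\<lambda>x. s m x - s n x) < e" and n: "n \<ge> N" for e N n
  proof -
    have "(\<integral>\<^sup>+x. ennreal ((s n x - h x)^2) \<partial>M) = (\<integral>\<^sup>+x. liminf (\<lambda>j. ennreal ((s n x - s (r j) x)^2)) \<partial>M)"
    proof (rule nn_integral_cong_AE)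
      show "AE x in M. ennreal ((s n x - h x)^2) = liminf (\<lambda>j. ennreal ((s n x - s (r j) x)^2))"
        using aelim
      proof eventually_elim
        case (elim x)
        have "(\<lambda>j. ennreal ((s n x - s (r j) x)^2)) \<longlonglongrightarrow> ennreal ((s n x - h x)^2)"
          by (intro tendsto_ennrealI tendsto_intros elim)
        from lim_imp_Liminf[OF trivial_limit_sequentially this] show ?case by simp
      qed
    qed
    also have "\<dots> \<le> liminf (\<lambda>j. (\<integral>\<^sup>+x. ennreal ((s n x - s (r j) x)^2) \<partial>M))"
      by (intro nn_integral_liminf) measurable
    also have "\<dots> \<le> ennreal (e^2)"
    proof (intro Liminf_le)
      show "\<forall>\<^sub>F j in sequentially. (\<integral>\<^sup>+x. ennreal ((s n x - s (r j) x)^2) \<partial>M) \<le> ennreal (e^2)"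
        unfolding eventually_sequentially
      proof (intro exI allI impI)
        fix j assume j: "j \<ge> N"
        have "r j \<ge> N" using j seq_suble[OF r, of j] by simp
        then have lt: "L2_norm M (\<lambda>x. s n x - s (r j) x) < e" using N n by auto
        have "(\<integral>\<^sup>+x. ennreal ((s n x - s (r j) x)^2) \<partial>M) = ennreal ((L2_norm M (\<lambda>x. s n x - s (r j) x))^2)"
          using s by (intro L2_sq_integral_eq L2_diff)
        also have "\<dots> \<le> ennreal (e^2)"
          using lt L2_norm_nonneg by (intro ennreal_leI power_mono) auto
        finally show "(\<integral>\<^sup>+x. ennreal ((s n x - s (r j) x)^2) \<partial>M) \<le> ennreal (e^2)" .
      qed
    qed simp
    finally show ?thesis .
  qed
  have diffL2: "(\<lambda>x. s n x - h x) \<in> L2 M" and diffle: "(\<integral>x. (s n x - h x)^2 \<partial>M) \<le> e^2"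
    if e: "e > 0" and N: "\<forall>m\<ge>N. \<forall>n\<ge>N. L2_norm M (\<lambda>x. s m x - s n x) < e" and n: "n \<ge> N" for e N n
  proof -
    have k: "(\<integral>\<^sup>+x. ennreal ((s n x - h x)^2) \<partial>M) \<le> ennreal (e^2)" by (rule key[OF e N n])
    have int: "integrable M (\<lambda>x. (s n x - h x)^2)"
      by (rule integrableI_bounded) (use k in \<open>auto simp: top.not_eq_extremum order_le_less_trans\<close>)
    then show "(\<lambda>x. s n x - h x) \<in> L2 M" by (intro L2_I) auto
    have "ennreal (\<integral>x. (s n x - h x)^2 \<partial>M) \<le> ennreal (e^2)"
      using k int by (subst nn_integral_eq_integral[symmetric]) auto
    then show "(\<integral>x. (s n x - h x)^2 \<partial>M) \<le> e^2" using e by (auto simp: ennreal_le_iff2)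
  qed
  obtain N1 where N1: "\<forall>m\<ge>N1. \<forall>n\<ge>N1. L2_norm M (\<lambda>x. s m x - s n x) < 1" using C[of 1] by auto
  have dN: "(\<lambda>x. s N1 x - h x) \<in> L2 M" using diffL2[of 1 N1 N1] N1 by simp
  have "(\<lambda>x. s N1 x - (s N1 x - h x)) \<in> L2 M" by (rule L2_diff[OF s dN])
  then have hL2: "h \<in> L2 M" by simp
  have "(\<lambda>n. L2_norm M (\<lambda>x. s n x - h x)) \<longlonglongrightarrow> 0"
  proof (rule LIMSEQ_I)
    fix e :: real assume e: "e > 0"
    obtain N where N: "\<forall>m\<ge>N. \<forall>n\<ge>N. L2_norm M (\<lambda>x. s m x - s n x) < e/2" using C[of "e/2"] e by auto
    show "\<exists>no. \<forall>n\<ge>no. norm (L2_norm M (\<lambda>x. s n x - h x) - 0) < e"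
    proof (intro exI allI impI)
      fix n assume n: "n \<ge> N"
      have "L2_norm M (\<lambda>x. s n x - h x) \<le> e/2"
        using diffle[of "e/2" N n] N n e by (intro L2_norm_le) auto
      then show "norm (L2_norm M (\<lambda>x. s n x - h x) - 0) < e" using e L2_norm_nonneg[of M "\<lambda>x. s n x - h x"] by simp
    qed
  qed
  then show ?thesis using hL2 by blast
qed

lemma diag_subseq:
  fixes a :: "nat \<Rightarrow> nat \<Rightarrow> real"
  assumes bdd: "\<And>k i. \<bar>a i k\<bar> \<le> \<beta> k"
  shows "\<exists>d. strict_mono d \<and> (\<forall>k. convergent (\<lambda>i. a (d i) k))"
proof -
  let ?P = "\<lambda>n. \<lambda>s. convergent (\<lambda>k. a (s k) n)"
  interpret nat: subseqs ?P
  proof (unfold convergent_def, unfold subseqs_def, auto)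
    fix n :: nat and s :: "nat \<Rightarrow> nat" assume s: "strict_mono s"
    have "bounded {-\<beta> n..\<beta> n}"
      using bounded_closed_interval by auto
    moreover have "\<And>k. a (s k) n \<in> {-\<beta> n..\<beta> n}"
      using bdd by (simp add: abs_le_iff minus_le_iff)
    ultimately have "\<exists>l s'. strict_mono s' \<and> ((\<lambda>k. a (s k) n) \<circ> s') \<longlonglongrightarrow> l"
      using compact_Icc compact_imp_seq_compact seq_compactE by metis
    thus "\<exists>s'. strict_mono (s'::nat\<Rightarrow>nat) \<and> (\<exists>l. (\<lambda>k. a (s (s' k)) n) \<longlonglongrightarrow> l)"
      by (auto simp: comp_def)
  qed
  define d where "d = nat.diagseq"
  have subseq: "strict_mono d"
    unfolding d_def using nat.subseq_diagseq by auto
  have rat_cnv: "?P n d" for n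
  proof -
    have Pn_seqseq: "?P n (nat.seqseq (Suc n))"
      by (rule nat.seqseq_holds)
    have 1: "(\<lambda>k. a ((nat.seqseq (Suc n) \<circ> (\<lambda>k. nat.fold_reduce (Suc n) k
      (Suc n + k))) k) n) = (\<lambda>k. a (nat.seqseq (Suc n) k) n) \<circ>
      (\<lambda>k. nat.fold_reduce (Suc n) k (Suc n + k))"
      by auto
    have 2: "?P n (d \<circ> ((+) (Suc n)))"
      unfolding d_def nat.diagseq_seqseq 1
      by (intro convergent_subseq_convergent Pn_seqseq nat.subseq_diagonal_rest)
    then obtain L where 3: "(\<lambda>na. a (d (na + Suc n)) n) \<longlonglongrightarrow> L"
      by (auto simp: add.commute dest: convergentD)
    then have "(\<lambda>k. a (d k) n) \<longlonglongrightarrow> L"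
      by (rule LIMSEQ_offset)
    then show ?thesis
      by (auto simp: convergent_def)
  qed
  show ?thesis using subseq rat_cnv by blast
qed

lemma cauchy_from_coeffs:
  fixes e :: "nat \<Rightarrow> nat \<Rightarrow> real" and D :: "nat \<Rightarrow> nat \<Rightarrow> real"
  assumes conv: "\<And>k. convergent (\<lambda>n. e n k)"
    and alpha: "\<alpha> \<ge> 0"
    and bound: "\<And>m n N. D m n \<le> \<alpha> * (\<Sum>k<N. (e m k - e n k)^2) + \<beta> N"
    and beta: "\<beta> \<longlonglongrightarrow> 0"
    and eps: "\<epsilon> > 0"
  shows "\<exists>N. \<forall>m\<ge>N. \<forall>n\<ge>N. D m n < \<epsilon>"
proof -
  obtain N0 where N0: "\<And>N. N \<ge> N0 \<Longrightarrow> \<bar>\<beta> N\<bar> < \<epsilon>/2"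
    using beta eps unfolding LIMSEQ_def dist_real_def by (metis diff_zero half_gt_zero)
  define \<eta> where "\<eta> = \<epsilon> / (2 * (\<alpha> + 1) * (real N0 + 1))"
  have eta: "\<eta> > 0" unfolding \<eta>_def using eps alpha by (intro divide_pos_pos mult_pos_pos) auto
  have "\<forall>k. \<exists>Mk. \<forall>m\<ge>Mk. \<forall>n\<ge>Mk. (e m k - e n k)^2 < \<eta>"
  proof
    fix k
    have "Cauchy (\<lambda>n. e n k)" using conv[of k] by (rule convergent_Cauchy)
    then obtain Mk where Mk: "\<forall>m\<ge>Mk. \<forall>n\<ge>Mk. norm (e m k - e n k) < sqrt \<eta>"
      using eta by (meson CauchyD real_sqrt_gt_zero)
    show "\<exists>Mk. \<forall>m\<ge>Mk. \<forall>n\<ge>Mk. (e m k - e n k)^2 < \<eta>"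
    proof (intro exI allI impI)
      fix m n assume "m \<ge> Mk" "n \<ge> Mk"
      then have "\<bar>e m k - e n k\<bar> < sqrt \<eta>" using Mk by auto
      then have "\<bar>e m k - e n k\<bar>^2 < (sqrt \<eta>)^2"
        by (intro power_strict_mono) auto
      then show "(e m k - e n k)^2 < \<eta>" using eta by simp
    qed
  qed
  then obtain Mk where Mk: "\<And>k m n. m \<ge> Mk k \<Longrightarrow> n \<ge> Mk k \<Longrightarrow> (e m k - e n k)^2 < \<eta>"
    by metis
  define MM where "MM = (\<Sum>k<N0. Mk k)"
  show ?thesis
  proof (intro exI allI impI)
    fix m n assume m: "m \<ge> MM" and n: "n \<ge> MM"
    have "(\<Sum>k<N0. (e m k - e n k)^2) \<le> (\<Sum>k<N0. \<eta>)"
    proof (rule sum_mono)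
      fix k assume k: "k \<in> {..<N0}"
      have "Mk k \<le> MM" unfolding MM_def using k by (intro member_le_sum) auto
      then show "(e m k - e n k)^2 \<le> \<eta>" using Mk[of k m n] m n by auto
    qed
    also have "\<dots> = real N0 * \<eta>" by simp
    finally have S: "(\<Sum>k<N0. (e m k - e n k)^2) \<le> real N0 * \<eta>" .
    have "\<alpha> * (real N0 * \<eta>) \<le> \<epsilon>/2"
    proof -
      have "\<alpha> * (real N0 * \<eta>) = \<epsilon> / 2 * ((\<alpha> * real N0) / ((\<alpha> + 1) * (real N0 + 1)))"
        unfolding \<eta>_def using alpha by (simp add: field_simps)
      also have "\<dots> \<le> \<epsilon> / 2 * 1"
        using eps alpha by (intro mult_left_mono) (auto simp: divide_le_eq intro!: mult_mono)
      finally show ?thesis by simp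
    qed
    then have "\<alpha> * (\<Sum>k<N0. (e m k - e n k)^2) \<le> \<epsilon>/2"
      using mult_left_mono[OF S alpha] by linarith
    then show "D m n < \<epsilon>" using bound[of m n N0] N0[of N0] by linarith
  qed
qed

lemma inf_CS:
  fixes a b :: "nat \<Rightarrow> real"
  assumes a: "summable (\<lambda>k. (a k)^2)" and b: "summable (\<lambda>k. (b k)^2)"
  shows "summable (\<lambda>k. a k * b k)" "(\<Sum>k. a k * b k)^2 \<le> (\<Sum>k. (a k)^2) * (\<Sum>k. (b k)^2)"
proof -
  have s2: "summable (\<lambda>k. ((a k)^2 + (b k)^2) / 2)" using a b by (intro summable_divide summable_add)
  have "norm (a k * b k) \<le> ((a k)^2 + (b k)^2) / 2" for k using two_abs_le[of "a k" "b k"] by simp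
  then show sab: "summable (\<lambda>k. a k * b k)"
    by (rule summable_comparison_test'[OF s2])
  have lim: "(\<lambda>n. (\<Sum>k<n. a k * b k)^2) \<longlonglongrightarrow> (\<Sum>k. a k * b k)^2"
    by (intro tendsto_power summable_LIMSEQ sab)
  have bd: "(\<Sum>k<n. a k * b k)^2 \<le> (\<Sum>k. (a k)^2) * (\<Sum>k. (b k)^2)" for n
  proof -
    have "(\<Sum>k<n. a k * b k)^2 \<le> (\<Sum>k<n. (a k)^2) * (\<Sum>k<n. (b k)^2)"
      by (rule Cauchy_Schwarz_ineq_sum)
    also have "\<dots> \<le> (\<Sum>k. (a k)^2) * (\<Sum>k. (b k)^2)"
      by (intro mult_mono sum_le_suminf a b sum_nonneg suminf_nonneg) auto
    finally show ?thesis .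
  qed
  show "(\<Sum>k. a k * b k)^2 \<le> (\<Sum>k. (a k)^2) * (\<Sum>k. (b k)^2)"
    using bd by (intro LIMSEQ_le_const2[OF lim]) auto
qed

lemma sq_sum_le2: "(p + q)^2 \<le> 2 * p^2 + 2 * (q::real)^2"
proof -
  have "0 \<le> (p - q)^2" by simp
  then show ?thesis by (simp add: power2_sum power2_diff)
qed

lemma summable_sq_diff:
  fixes c d :: "nat \<Rightarrow> real"
  assumes "summable (\<lambda>k. (c k)^2)" "summable (\<lambda>k. (d k)^2)"
  shows "summable (\<lambda>k. (c k - d k)^2)"
proof (rule summable_comparison_test')
  show "summable (\<lambda>k. 2 * (c k)^2 + 2 * (d k)^2)" using assms by (intro summable_add summable_mult)
  show "norm ((c k - d k)^2) \<le> 2 * (c k)^2 + 2 * (d k)^2" for k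
    using sq_sum_le2[of "c k" "- d k"] by simp
qed

definition wv :: "'a set \<Rightarrow> (nat \<Rightarrow> 'a \<Rightarrow> real) \<Rightarrow> nat \<Rightarrow> 'a \<Rightarrow> real" where
  "wv E v k x = indicator E x * v k x"

definition tl2 :: "'a set \<Rightarrow> (nat \<Rightarrow> 'a \<Rightarrow> real) \<Rightarrow> nat \<Rightarrow> 'a \<Rightarrow> real" where
  "tl2 E v N x = (\<Sum>k. (wv E v (k + N) x)^2)"

definition Syn :: "'a set \<Rightarrow> (nat \<Rightarrow> 'a \<Rightarrow> real) \<Rightarrow> (nat \<Rightarrow> real) \<Rightarrow> 'a \<Rightarrow> real" where
  "Syn E v c x = (\<Sum>k. c k * wv E v k x)"

context
  fixes M :: "'a measure" and E :: "'a set" and C :: real and v :: "nat \<Rightarrow> 'a \<Rightarrow> real"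
  assumes Es: "E \<in> sets M" and Efin: "emeasure M E < \<infinity>"
    and vL2: "\<And>k. v k \<in> L2 M"
    and vbd: "\<And>x. x \<in> E \<Longrightarrow> summable (\<lambda>k. (v k x)^2) \<and> (\<Sum>k. (v k x)^2) \<le> C^2"
begin

lemma wv_L2: "wv E v k \<in> L2 M"
  using L2_indicator[OF vL2 Es] unfolding wv_def by simp

lemma wv_meas[measurable]: "wv E v k \<in> borel_measurable M"
  using wv_L2 by (auto simp: L2_def)

lemma wv_out: "x \<notin> E \<Longrightarrow> wv E v k x = 0"
  by (simp add: wv_def)

lemma wv_in: "x \<in> E \<Longrightarrow> wv E v k x = v k x"
  by (simp add: wv_def)

lemma wv_summable: "summable (\<lambda>k. (wv E v k x)^2)"
  by (cases "x \<in> E") (auto simp: wv_in wv_out vbd)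

lemma wv_shift_summable: "summable (\<lambda>k. (wv E v (k + N) x)^2)"
  using wv_summable summable_iff_shift[of "\<lambda>k. (wv E v k x)^2" N] by simp

lemma wv_suminf_le: "(\<Sum>k. (wv E v k x)^2) \<le> C^2 * indicator E x"
  by (cases "x \<in> E") (auto simp: wv_in wv_out vbd)

lemma C2_nonneg: "0 \<le> C^2" by simp

lemma wv_sum_le: "finite I \<Longrightarrow> (\<Sum>k\<in>I. (wv E v k x)^2) \<le> C^2 * indicator E x"
  using sum_le_suminf[OF wv_summable, of I x] wv_suminf_le[of x] by auto

lemma tl2_nonneg: "0 \<le> tl2 E v N x"
  unfolding tl2_def by (intro suminf_nonneg wv_shift_summable) auto

lemma tl2_le: "tl2 E v N x \<le> C^2 * indicator E x"
proof -
  have "tl2 E v N x \<le> (\<Sum>k. (wv E v k x)^2)"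
    unfolding tl2_def using suminf_split_initial_segment[OF wv_summable, of x N]
    by (simp add: sum_nonneg)
  then show ?thesis using wv_suminf_le[of x] by simp
qed

lemma tl2_meas[measurable]: "tl2 E v N \<in> borel_measurable M"
  unfolding tl2_def by measurable

lemma ind_integrable: "integrable M (\<lambda>x. K * indicator E x :: real)"
  using Es Efin by (intro integrable_mult_right) (simp add: integrable_indicator_iff top.not_eq_extremum)

lemma ind_integral: "(\<integral>x. K * indicator E x \<partial>M) = K * measure M E"
  using Es Efin by simp

lemma tl2_integrable: "integrable M (tl2 E v N)"
  by (rule Bochner_Integration.integrable_bound[OF ind_integrable[of "C^2"]])
     (auto simp: tl2_nonneg tl2_le)

lemma tl2_lim: "(\<lambda>N. \<integral>x. tl2 E v N x \<partial>M) \<longlonglongrightarrow> 0"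
proof -
  have "(\<lambda>N. \<integral>x. tl2 E v N x \<partial>M) \<longlonglongrightarrow> (\<integral>x. 0 \<partial>M)"
  proof (rule integral_dominated_convergence[where w="\<lambda>x. C^2 * indicator E x"])
    show "(\<lambda>x. 0::real) \<in> borel_measurable M" by simp
    show "\<And>i. tl2 E v i \<in> borel_measurable M" by measurable
    show "integrable M (\<lambda>x. C^2 * indicator E x)" by (rule ind_integrable)
    show "AE x in M. (\<lambda>i. tl2 E v i x) \<longlonglongrightarrow> 0"
      unfolding tl2_def using suminf_exist_split2[OF wv_summable] by auto
    show "\<And>i. AE x in M. norm (tl2 E v i x) \<le> C^2 * indicator E x"
      using tl2_le tl2_nonneg by auto
  qed
  then show ?thesis by simp
qed

lemma tl2_sum_le: "(\<Sum>k<L. (wv E v (k + N) x)^2) \<le> tl2 E v N x"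
  unfolding tl2_def by (intro sum_le_suminf wv_shift_summable) auto

lemma Syn_summable:
  assumes "summable (\<lambda>k. (c k)^2)"
  shows "summable (\<lambda>k. c k * wv E v k x)"
  using inf_CS(1)[OF assms wv_summable] .

lemma Syn_meas[measurable]: "Syn E v c \<in> borel_measurable M"
  unfolding Syn_def by measurable

lemma Syn_out: "x \<notin> E \<Longrightarrow> Syn E v c x = 0"
  by (simp add: Syn_def wv_out)

lemma Syn_tail:
  assumes c: "summable (\<lambda>k. (c k)^2)"
  shows "Syn E v c x - (\<Sum>k<n. c k * wv E v k x) = (\<Sum>k. c (k + n) * wv E v (k + n) x)"
  unfolding Syn_def using suminf_split_initial_segment[OF Syn_summable[OF c], of x n] by simp

lemma Syn_tail_sq:
  assumes c: "summable (\<lambda>k. (c k)^2)"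
  shows "(Syn E v c x - (\<Sum>k<n. c k * wv E v k x))^2 \<le> (\<Sum>k. (c (k + n))^2) * tl2 E v n x"
  unfolding Syn_tail[OF c] tl2_def
  using c summable_iff_shift[of "\<lambda>k. (c k)^2" n]
  by (intro inf_CS(2) wv_shift_summable) auto

lemma Syn_sq_le:
  assumes c: "summable (\<lambda>k. (c k)^2)"
  shows "(Syn E v c x)^2 \<le> (\<Sum>k. (c k)^2) * (C^2 * indicator E x)"
proof -
  have "(Syn E v c x)^2 \<le> (\<Sum>k. (c k)^2) * (\<Sum>k. (wv E v k x)^2)"
    unfolding Syn_def by (rule inf_CS(2)[OF c wv_summable])
  also have "\<dots> \<le> (\<Sum>k. (c k)^2) * (C^2 * indicator E x)"
    using c by (intro mult_left_mono wv_suminf_le suminf_nonneg) auto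
  finally show ?thesis .
qed

lemma Syn_L2:
  assumes c: "summable (\<lambda>k. (c k)^2)"
  shows "Syn E v c \<in> L2 M"
proof (rule L2_I)
  show "Syn E v c \<in> borel_measurable M" by measurable
  show "integrable M (\<lambda>x. (Syn E v c x)^2)"
  proof (rule Bochner_Integration.integrable_bound[OF ind_integrable[of "(\<Sum>k. (c k)^2) * C^2"]])
    have nn: "0 \<le> (\<Sum>k. (c k)^2)" by (intro suminf_nonneg c) auto
    show "AE x in M. norm ((Syn E v c x)^2) \<le> norm ((\<Sum>k. (c k)^2) * C^2 * indicator E x)"
    proof (rule AE_I2)
      fix x
      have "0 \<le> (\<Sum>k. (c k)^2) * C^2 * indicator E x" using nn by simp
      then show "norm ((Syn E v c x)^2) \<le> norm ((\<Sum>k. (c k)^2) * C^2 * indicator E x)"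
        using Syn_sq_le[OF c, of x] by (simp add: mult.assoc)
    qed
  qed simp
qed

lemma Syn_L2_on:
  assumes c: "summable (\<lambda>k. (c k)^2)"
  shows "Syn E v c \<in> L2_on M E"
  unfolding L2_on_def using Syn_L2[OF c] Syn_out by auto

lemma partial_L2: "(\<lambda>x. \<Sum>k<n. c k * wv E v k x) \<in> L2 M"
  by (intro L2_sum L2_cmult wv_L2)

lemma Syn_conv:
  assumes c: "summable (\<lambda>k. (c k)^2)"
  shows "L2_series_conv M c (wv E v) (Syn E v c)"
  unfolding L2_series_conv_def
proof (intro conjI Syn_L2[OF c])
  define t where "t n = (\<Sum>k. (c (k + n))^2)" for n
  have t0: "t \<longlonglongrightarrow> 0" unfolding t_def by (rule suminf_exist_split2[OF c])
  have tnn: "0 \<le> t n" for n unfolding t_def using c summable_iff_shift[of "\<lambda>k. (c k)^2" n]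
    by (intro suminf_nonneg) auto
  have le: "L2_norm M (\<lambda>x. (\<Sum>k<n. c k * wv E v k x) - Syn E v c x) \<le> sqrt (t n * C^2 * measure M E)" for n
  proof (rule L2_norm_le)
    show "0 \<le> sqrt (t n * C^2 * measure M E)" using tnn by simp
    have "(\<integral>x. ((\<Sum>k<n. c k * wv E v k x) - Syn E v c x)^2 \<partial>M) \<le> (\<integral>x. (t n * C^2) * indicator E x \<partial>M)"
    proof (rule integral_mono)
      show "integrable M (\<lambda>x. ((\<Sum>k<n. c k * wv E v k x) - Syn E v c x)^2)"
        using L2_diff[OF partial_L2 Syn_L2[OF c]] by (auto simp: L2_def)
      show "integrable M (\<lambda>x. (t n * C^2) * indicator E x)" by (rule ind_integrable)
      fix x
      have "((\<Sum>k<n. c k * wv E v k x) - Syn E v c x)^2 = (Syn E v c x - (\<Sum>k<n. c k * wv E v k x))^2"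
        by (simp add: power2_commute)
      also have "\<dots> \<le> t n * tl2 E v n x" unfolding t_def by (rule Syn_tail_sq[OF c])
      also have "\<dots> \<le> t n * (C^2 * indicator E x)" using tnn by (intro mult_left_mono tl2_le)
      finally show "((\<Sum>k<n. c k * wv E v k x) - Syn E v c x)^2 \<le> (t n * C^2) * indicator E x"
        by (simp add: mult.assoc)
    qed
    also have "\<dots> = t n * C^2 * measure M E" by (rule ind_integral)
    also have "\<dots> = (sqrt (t n * C^2 * measure M E))^2" using tnn by simp
    finally show "(\<integral>x. ((\<Sum>k<n. c k * wv E v k x) - Syn E v c x)^2 \<partial>M) \<le> (sqrt (t n * C^2 * measure M E))^2" .
  qed
  have "(\<lambda>n. sqrt (t n * C^2 * measure M E)) \<longlonglongrightarrow> sqrt (0 * C^2 * measure M E)"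
    by (intro tendsto_intros t0)
  then have "(\<lambda>n. sqrt (t n * C^2 * measure M E)) \<longlonglongrightarrow> 0" by simp
  show "(\<lambda>n. L2_norm M (\<lambda>x. (\<Sum>k<n. c k * wv E v k x) - Syn E v c x)) \<longlonglongrightarrow> 0"
  proof (rule tendsto_sandwich[of "\<lambda>_. 0" _ _ "\<lambda>n. sqrt (t n * C^2 * measure M E)"])
    show "\<forall>\<^sub>F n in sequentially. 0 \<le> L2_norm M (\<lambda>x. (\<Sum>k<n. c k * wv E v k x) - Syn E v c x)"
      by (simp add: L2_norm_nonneg)
    show "\<forall>\<^sub>F n in sequentially. L2_norm M (\<lambda>x. (\<Sum>k<n. c k * wv E v k x) - Syn E v c x) \<le> sqrt (t n * C^2 * measure M E)"
      using le by simp
  qed (use \<open>(\<lambda>n. sqrt (t n * C^2 * measure M E)) \<longlonglongrightarrow> 0\<close> in auto)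
qed

end

lemma L2_norm_diff_le:
  assumes "f \<in> L2 M" "g \<in> L2 M"
  shows "L2_norm M (\<lambda>x. f x - g x) \<le> L2_norm M f + L2_norm M g"
proof -
  have "L2_norm M (\<lambda>x. f x + (-1) * g x) \<le> L2_norm M f + L2_norm M (\<lambda>x. (-1) * g x)"
    by (rule L2_norm_add[OF assms(1) L2_cmult[OF assms(2)]])
  then show ?thesis unfolding L2_norm_cmult by simp
qed

lemma L2_on_sub: "L2_on M E \<subseteq> L2 M" by (auto simp: L2_on_def)

lemma L2_on_diff: "f \<in> L2_on M E \<Longrightarrow> g \<in> L2_on M E \<Longrightarrow> (\<lambda>x. f x - g x) \<in> L2_on M E"
  unfolding L2_on_def using L2_diff by auto

context
  fixes M :: "'a measure" and E :: "'a set" and C :: real and v :: "nat \<Rightarrow> 'a \<Rightarrow> real"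
  assumes Es: "E \<in> sets M" and Efin: "emeasure M E < \<infinity>"
    and vL2: "\<And>k. v k \<in> L2 M"
    and vbd: "\<And>x. x \<in> E \<Longrightarrow> summable (\<lambda>k. (v k x)^2) \<and> (\<Sum>k. (v k x)^2) \<le> C^2"
begin

lemmas ctx = Es Efin vL2 vbd

lemma Syn_diff:
  assumes c: "summable (\<lambda>k. (c k)^2)" and d: "summable (\<lambda>k. (d k)^2)"
  shows "Syn E v c x - Syn E v d x = Syn E v (\<lambda>k. c k - d k) x"
  unfolding Syn_def
  using suminf_diff[OF Syn_summable[OF ctx c] Syn_summable[OF ctx d], of x]
  by (simp add: left_diff_distrib)

lemma Syn_compact_bound:
  assumes d: "summable (\<lambda>k. (d k)^2)"
  shows "(L2_norm M (Syn E v d))^2 \<le> 2 * C^2 * measure M E * (\<Sum>k<N. (d k)^2)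
           + 2 * (\<Sum>k. (d k)^2) * (\<integral>x. tl2 E v N x \<partial>M)"
proof -
  define A where "A = (\<Sum>k<N. (d k)^2)"
  define S where "S = (\<Sum>k. (d k)^2)"
  have Snn: "0 \<le> S" unfolding S_def by (intro suminf_nonneg d) auto
  have Ann: "0 \<le> A" unfolding A_def by (intro sum_nonneg) auto
  have pt: "(Syn E v d x)^2 \<le> (2 * A * C^2) * indicator E x + (2 * S) * tl2 E v N x" for x
  proof -
    define p where "p = (\<Sum>k<N. d k * wv E v k x)"
    define q where "q = (\<Sum>k. d (k + N) * wv E v (k + N) x)"
    have "Syn E v d x = p + q" using Syn_tail[OF ctx d, of x N] unfolding p_def q_def by simp
    then have "(Syn E v d x)^2 \<le> 2 * p^2 + 2 * q^2" using sq_sum_le2 by simp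
    also have "p^2 \<le> A * (C^2 * indicator E x)"
    proof -
      have "p^2 \<le> A * (\<Sum>k<N. (wv E v k x)^2)" unfolding p_def A_def by (rule Cauchy_Schwarz_ineq_sum)
      also have "\<dots> \<le> A * (C^2 * indicator E x)"
        using Ann by (intro mult_left_mono wv_sum_le[OF ctx]) auto
      finally show ?thesis .
    qed
    also have "q^2 \<le> S * tl2 E v N x"
    proof -
      have ds: "summable (\<lambda>k. (d (k + N))^2)" using d summable_iff_shift[of "\<lambda>k. (d k)^2" N] by simp
      have "q^2 \<le> (\<Sum>k. (d (k + N))^2) * tl2 E v N x"
        unfolding q_def tl2_def by (rule inf_CS(2)[OF ds wv_shift_summable[OF ctx]])
      also have "\<dots> \<le> S * tl2 E v N x"
      proof (rule mult_right_mono)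
        show "0 \<le> tl2 E v N x" by (rule tl2_nonneg[OF ctx])
        show "(\<Sum>k. (d (k + N))^2) \<le> S"
          unfolding S_def using suminf_split_initial_segment[OF d, of N] by (simp add: sum_nonneg)
      qed
      finally show ?thesis .
    qed
    finally show ?thesis by (simp add: algebra_simps)
  qed
  have "(L2_norm M (Syn E v d))^2 = (\<integral>x. (Syn E v d x)^2 \<partial>M)" by (rule L2_norm_sq)
  also have "\<dots> \<le> (\<integral>x. (2 * A * C^2) * indicator E x + (2 * S) * tl2 E v N x \<partial>M)"
  proof (rule integral_mono[OF _ _ pt])
    show "integrable M (\<lambda>x. (Syn E v d x)^2)" using Syn_L2[OF ctx d] by (auto simp: L2_def)
    show "integrable M (\<lambda>x. (2 * A * C^2) * indicator E x + (2 * S) * tl2 E v N x)"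
      by (intro Bochner_Integration.integrable_add ind_integrable[OF ctx] integrable_mult_right tl2_integrable[OF ctx])
  qed
  also have "\<dots> = (2 * A * C^2) * measure M E + (2 * S) * (\<integral>x. tl2 E v N x \<partial>M)"
    using ind_integrable[OF ctx] tl2_integrable[OF ctx] ind_integral[OF ctx]
    by (subst Bochner_Integration.integral_add) auto
  finally show ?thesis unfolding A_def S_def by (simp add: algebra_simps)
qed

lemma inner_v_wv:
  assumes f: "f \<in> L2_on M E"
  shows "L2_inner M f (v k) = L2_inner M f (wv E v k)"
  unfolding L2_inner_def
proof (rule Bochner_Integration.integral_cong[OF refl])
  fix x assume "x \<in> space M"
  then show "f x * v k x = f x * wv E v k x" using f by (cases "x \<in> E") (auto simp: L2_on_def wv_def)
qed

lemma bessel_finite: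
  assumes f: "f \<in> L2_on M E" and I: "finite I"
  shows "(\<Sum>k\<in>I. (L2_inner M f (v k))^2) \<le> (L2_norm M f)^2 * (\<integral>x. (\<Sum>k\<in>I. (wv E v k x)^2) \<partial>M)"
proof -
  have fL2: "f \<in> L2 M" using f by (auto simp: L2_on_def)
  define a where "a k = L2_inner M f (wv E v k)" for k
  have a: "L2_inner M f (v k) = a k" for k unfolding a_def by (rule inner_v_wv[OF f])
  define S where "S = (\<Sum>k\<in>I. (a k)^2)"
  define Q where "Q = (\<integral>x. (\<Sum>k\<in>I. (wv E v k x)^2) \<partial>M)"
  define g where "g x = (\<Sum>k\<in>I. a k * wv E v k x)" for x
  have gL2: "g \<in> L2 M" unfolding g_def by (intro L2_sum L2_cmult wv_L2[OF ctx])
  have Snn: "0 \<le> S" unfolding S_def by (intro sum_nonneg) auto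
  have Qnn: "0 \<le> Q" unfolding Q_def by (intro integral_nonneg_AE AE_I2 sum_nonneg) auto
  have "L2_inner M g f = (\<Sum>k\<in>I. L2_inner M (\<lambda>x. a k * wv E v k x) f)"
    unfolding g_def by (rule L2_inner_sum) (auto intro: L2_cmult wv_L2[OF ctx] fL2)
  also have "\<dots> = S" unfolding S_def L2_inner_cmult
    by (simp add: L2_inner_commute[of M "wv E v _" f] a_def power2_eq_square)
  finally have Sg: "S = L2_inner M g f" by simp
  have "(L2_norm M g)^2 \<le> S * Q"
  proof -
    have "(L2_norm M g)^2 = (\<integral>x. (g x)^2 \<partial>M)" by (rule L2_norm_sq)
    also have "\<dots> \<le> (\<integral>x. S * (\<Sum>k\<in>I. (wv E v k x)^2) \<partial>M)"
    proof (rule integral_mono)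
      show "integrable M (\<lambda>x. (g x)^2)" using gL2 by (auto simp: L2_def)
      show "integrable M (\<lambda>x. S * (\<Sum>k\<in>I. (wv E v k x)^2))"
        using wv_L2[OF ctx] by (intro integrable_mult_right Bochner_Integration.integrable_sum) (auto simp: L2_def)
      show "(g x)^2 \<le> S * (\<Sum>k\<in>I. (wv E v k x)^2)" for x
        unfolding g_def S_def by (rule Cauchy_Schwarz_ineq_sum)
    qed
    also have "\<dots> = S * Q" unfolding Q_def by simp
    finally show ?thesis .
  qed
  have "S^2 \<le> (L2_norm M g * L2_norm M f)^2"
    using L2_CS[OF gL2 fL2] Sg by (metis abs_le_square_iff power2_abs abs_ge_self order_trans abs_idempotent
        abs_le_self_iff abs_of_nonneg L2_norm_nonneg mult_nonneg_nonneg power_mono)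
  also have "\<dots> = (L2_norm M g)^2 * (L2_norm M f)^2" by (simp add: power_mult_distrib)
  also have "\<dots> \<le> (S * Q) * (L2_norm M f)^2" by (rule mult_right_mono[OF \<open>(L2_norm M g)^2 \<le> S * Q\<close>]) simp
  finally have "S * S \<le> S * (Q * (L2_norm M f)^2)" by (simp add: power2_eq_square algebra_simps)
  then have "S \<le> Q * (L2_norm M f)^2"
    using Snn Qnn by (cases "S = 0") (auto simp: mult_le_cancel_left)
  then show ?thesis unfolding S_def Q_def a by (simp add: mult.commute)
qed

end

lemma L2_on_patch:
  assumes g: "g \<in> L2_on M E" and l: "l \<in> L2 M" and Es: "E \<in> sets M"
  shows "L2_norm M (\<lambda>x. g x - indicator E x * l x) \<le> L2_norm M (\<lambda>x. g x - l x)"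
proof -
  have gL2: "g \<in> L2 M" using g by (auto simp: L2_on_def)
  have "(\<integral>x. (g x - indicator E x * l x)^2 \<partial>M) \<le> (\<integral>x. (g x - l x)^2 \<partial>M)"
  proof (rule integral_mono_AE)
    show "integrable M (\<lambda>x. (g x - indicator E x * l x)^2)"
      using L2_diff[OF gL2 L2_indicator[OF l Es]] by (auto simp: L2_def)
    show "integrable M (\<lambda>x. (g x - l x)^2)"
      using L2_diff[OF gL2 l] by (auto simp: L2_def)
    show "AE x in M. (g x - indicator E x * l x)^2 \<le> (g x - l x)^2"
    proof (rule AE_I)
      show "{x \<in> space M. \<not> (g x - indicator E x * l x)^2 \<le> (g x - l x)^2} \<subseteq> {}"
        using g by (auto simp: L2_on_def indicator_def)
    qed auto
  qed
  then show ?thesis unfolding L2_norm_def by simp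
qed

context
  fixes M :: "'a measure" and E :: "'a set" and C :: real and v :: "nat \<Rightarrow> 'a \<Rightarrow> real"
  assumes Es: "E \<in> sets M" and Efin: "emeasure M E < \<infinity>"
    and vL2: "\<And>k. v k \<in> L2 M"
    and vbd: "\<And>x. x \<in> E \<Longrightarrow> summable (\<lambda>k. (v k x)^2) \<and> (\<Sum>k. (v k x)^2) \<le> C^2"
begin

lemmas ctx2 = Es Efin vL2 vbd

lemma bessel_tail:
  assumes f: "f \<in> L2_on M E"
  shows "summable (\<lambda>k. (L2_inner M f (v (k + N)))^2)"
    "(\<Sum>k. (L2_inner M f (v (k + N)))^2) \<le> (L2_norm M f)^2 * (\<integral>x. tl2 E v N x \<partial>M)"
proof -
  have fin: "(\<Sum>k<L. (L2_inner M f (v (k + N)))^2) \<le> (L2_norm M f)^2 * (\<integral>x. tl2 E v N x \<partial>M)" for L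
  proof -
    have inj: "inj_on (\<lambda>k. k + N) {..<L}" by (simp add: inj_on_def)
    have "(\<Sum>k<L. (L2_inner M f (v (k + N)))^2) = (\<Sum>k\<in>(\<lambda>k. k + N) ` {..<L}. (L2_inner M f (v k))^2)"
      by (simp add: sum.reindex[OF inj])
    also have "\<dots> \<le> (L2_norm M f)^2 * (\<integral>x. (\<Sum>k\<in>(\<lambda>k. k + N) ` {..<L}. (wv E v k x)^2) \<partial>M)"
      by (rule bessel_finite[OF ctx2 f]) auto
    also have "(\<integral>x. (\<Sum>k\<in>(\<lambda>k. k + N) ` {..<L}. (wv E v k x)^2) \<partial>M) = (\<integral>x. (\<Sum>k<L. (wv E v (k + N) x)^2) \<partial>M)"
      by (simp add: sum.reindex[OF inj])
    also have "(\<integral>x. (\<Sum>k<L. (wv E v (k + N) x)^2) \<partial>M) \<le> (\<integral>x. tl2 E v N x \<partial>M)"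
    proof (rule integral_mono)
      show "integrable M (\<lambda>x. \<Sum>k<L. (wv E v (k + N) x)^2)"
        using wv_L2[OF ctx2] by (intro Bochner_Integration.integrable_sum) (auto simp: L2_def)
      show "integrable M (tl2 E v N)" by (rule tl2_integrable[OF ctx2])
      show "(\<Sum>k<L. (wv E v (k + N) x)^2) \<le> tl2 E v N x" for x by (rule tl2_sum_le[OF ctx2])
    qed
    then have "(L2_norm M f)^2 * (\<integral>x. (\<Sum>k<L. (wv E v (k + N) x)^2) \<partial>M) \<le> (L2_norm M f)^2 * (\<integral>x. tl2 E v N x \<partial>M)"
      by (rule mult_left_mono) simp
    finally show ?thesis .
  qed
  show s: "summable (\<lambda>k. (L2_inner M f (v (k + N)))^2)"
    by (rule summableI_nonneg_bounded[OF _ fin]) simp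
  show "(\<Sum>k. (L2_inner M f (v (k + N)))^2) \<le> (L2_norm M f)^2 * (\<integral>x. tl2 E v N x \<partial>M)"
    by (rule suminf_le_const[OF s fin])
qed

lemma tl2_0_int: "(\<integral>x. tl2 E v 0 x \<partial>M) \<le> C^2 * measure M E"
proof -
  have "(\<integral>x. tl2 E v 0 x \<partial>M) \<le> (\<integral>x. C^2 * indicator E x \<partial>M)"
    by (rule integral_mono[OF tl2_integrable[OF ctx2] ind_integrable[OF ctx2] tl2_le[OF ctx2]])
  then show ?thesis by (simp only: ind_integral[OF ctx2])
qed

lemma bessel_all:
  assumes f: "f \<in> L2_on M E"
  shows "summable (\<lambda>k. (L2_inner M f (v k))^2)"
    "(\<Sum>k. (L2_inner M f (v k))^2) \<le> (C^2 * measure M E) * (L2_norm M f)^2"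
proof -
  show "summable (\<lambda>k. (L2_inner M f (v k))^2)" using bessel_tail(1)[OF f, of 0] by simp
  have "(\<Sum>k. (L2_inner M f (v k))^2) \<le> (L2_norm M f)^2 * (\<integral>x. tl2 E v 0 x \<partial>M)"
    using bessel_tail(2)[OF f, of 0] by simp
  also have "\<dots> \<le> (L2_norm M f)^2 * (C^2 * measure M E)"
    by (rule mult_left_mono[OF tl2_0_int]) simp
  finally show "(\<Sum>k. (L2_inner M f (v k))^2) \<le> (C^2 * measure M E) * (L2_norm M f)^2"
    by (simp add: mult.commute)
qed

lemma Syn_compact:
  fixes cf :: "('a \<Rightarrow> real) \<Rightarrow> nat \<Rightarrow> real" and F :: "nat \<Rightarrow> 'a \<Rightarrow> real"
    and B K :: real and \<gamma> :: "nat \<Rightarrow> real"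
  assumes DL2: "D \<subseteq> L2 M"
    and cf_sum: "\<And>f. f \<in> D \<Longrightarrow> summable (\<lambda>k. (cf f k)^2)"
    and cf_diff: "\<And>f g. f \<in> D \<Longrightarrow> g \<in> D \<Longrightarrow> (\<Sum>k. (cf f k - cf g k)^2) \<le> K * (L2_norm M (\<lambda>x. f x - g x))^2"
    and Knn: "K \<ge> 0"
    and cf_bd: "\<And>f k. f \<in> D \<Longrightarrow> \<bar>cf f k\<bar> \<le> \<gamma> k * L2_norm M f"
    and gnn: "\<And>k. \<gamma> k \<ge> 0"
    and F: "\<forall>n. F n \<in> D \<and> L2_norm M (F n) \<le> B"
  shows "\<exists>r l. strict_mono r \<and> l \<in> L2_on M E \<and>
           (\<lambda>n. L2_norm M (\<lambda>x. Syn E v (cf (F (r n))) x - l x)) \<longlonglongrightarrow> 0"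
proof -
  have FD: "F n \<in> D" and FB: "L2_norm M (F n) \<le> B" for n using F by auto
  have FL2: "F n \<in> L2 M" for n using FD DL2 by auto
  have B0: "B \<ge> 0" using FB[of 0] L2_norm_nonneg[of M "F 0"] by simp
  have "\<bar>cf (F i) k\<bar> \<le> \<gamma> k * B" for i k
    using cf_bd[OF FD[of i], of k] mult_left_mono[OF FB[of i] gnn[of k]] by simp
  then obtain d where d: "strict_mono d" and conv: "\<And>k. convergent (\<lambda>i. cf (F (d i)) k)"
    using diag_subseq[of "\<lambda>i k. cf (F i) k" "\<lambda>k. \<gamma> k * B"] by blast
  define S where "S n = Syn E v (cf (F (d n)))" for n
  have SL2: "S n \<in> L2 M" for n unfolding S_def by (rule Syn_L2[OF ctx2 cf_sum[OF FD]])
  define \<beta> where "\<beta> N = 2 * (K * (2 * B)^2) * (\<integral>x. tl2 E v N x \<partial>M)" for N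
  have beta: "\<beta> \<longlonglongrightarrow> 0"
  proof -
    have "\<beta> \<longlonglongrightarrow> 2 * (K * (2 * B)^2) * 0" unfolding \<beta>_def by (intro tendsto_intros tl2_lim[OF ctx2])
    then show ?thesis by simp
  qed
  have bound: "(L2_norm M (\<lambda>x. S m x - S n x))^2 \<le> (2 * C^2 * measure M E) *
      (\<Sum>k<N. (cf (F (d m)) k - cf (F (d n)) k)^2) + \<beta> N" for m n N
  proof -
    define dd where "dd k = cf (F (d m)) k - cf (F (d n)) k" for k
    have sm: "summable (\<lambda>k. (cf (F (d m)) k)^2)" "summable (\<lambda>k. (cf (F (d n)) k)^2)"
      using cf_sum FD by auto
    have dds: "summable (\<lambda>k. (dd k)^2)" unfolding dd_def by (rule summable_sq_diff[OF sm])
    have eq: "(\<lambda>x. S m x - S n x) = Syn E v dd"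
      unfolding S_def dd_def by (rule ext, rule Syn_diff[OF ctx2 sm])
    have "(\<Sum>k. (dd k)^2) \<le> K * (L2_norm M (\<lambda>x. F (d m) x - F (d n) x))^2"
      unfolding dd_def by (rule cf_diff[OF FD FD])
    also have "\<dots> \<le> K * (2 * B)^2"
    proof (rule mult_left_mono[OF _ Knn])
      have "L2_norm M (\<lambda>x. F (d m) x - F (d n) x) \<le> L2_norm M (F (d m)) + L2_norm M (F (d n))"
        by (rule L2_norm_diff_le[OF FL2 FL2])
      also have "\<dots> \<le> 2 * B" using FB[of "d m"] FB[of "d n"] by simp
      finally show "(L2_norm M (\<lambda>x. F (d m) x - F (d n) x))^2 \<le> (2 * B)^2"
        by (intro power_mono L2_norm_nonneg)
    qed
    finally have ddb: "(\<Sum>k. (dd k)^2) \<le> K * (2 * B)^2" .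
    have tnn: "0 \<le> (\<integral>x. tl2 E v N x \<partial>M)"
      by (intro integral_nonneg_AE AE_I2 tl2_nonneg[OF ctx2])
    have "(L2_norm M (\<lambda>x. S m x - S n x))^2 \<le> 2 * C^2 * measure M E * (\<Sum>k<N. (dd k)^2)
           + 2 * (\<Sum>k. (dd k)^2) * (\<integral>x. tl2 E v N x \<partial>M)"
      unfolding eq by (rule Syn_compact_bound[OF ctx2 dds])
    also have "2 * (\<Sum>k. (dd k)^2) * (\<integral>x. tl2 E v N x \<partial>M) \<le> \<beta> N"
      unfolding \<beta>_def using ddb tnn by (intro mult_right_mono) auto
    finally show ?thesis unfolding dd_def by simp
  qed
  have cauchy: "\<exists>N. \<forall>m\<ge>N. \<forall>n\<ge>N. L2_norm M (\<lambda>x. S m x - S n x) < e" if e: "e > 0" for e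
  proof -
    obtain N where N: "\<forall>m\<ge>N. \<forall>n\<ge>N. (L2_norm M (\<lambda>x. S m x - S n x))^2 < e^2"
      using cauchy_from_coeffs[OF conv _ bound beta, of "e^2"] e by auto
    show ?thesis
    proof (intro exI allI impI)
      fix m n assume "m \<ge> N" "n \<ge> N"
      then have "(L2_norm M (\<lambda>x. S m x - S n x))^2 < e^2" using N by auto
      then show "L2_norm M (\<lambda>x. S m x - S n x) < e"
        using e L2_norm_nonneg by (simp add: power_less_imp_less_base)
    qed
  qed
  obtain l0 where l0: "l0 \<in> L2 M" and lim0: "(\<lambda>n. L2_norm M (\<lambda>x. S n x - l0 x)) \<longlonglongrightarrow> 0"
    using L2_complete[OF SL2 cauchy] by blast
  define l where "l x = indicator E x * l0 x" for x
  have lL2: "l \<in> L2_on M E"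
    unfolding L2_on_def l_def using L2_indicator[OF l0 Es] by auto
  have "(\<lambda>n. L2_norm M (\<lambda>x. S n x - l x)) \<longlonglongrightarrow> 0"
  proof (rule tendsto_sandwich[of "\<lambda>_. 0" _ _ "\<lambda>n. L2_norm M (\<lambda>x. S n x - l0 x)"])
    show "\<forall>\<^sub>F n in sequentially. 0 \<le> L2_norm M (\<lambda>x. S n x - l x)" by (simp add: L2_norm_nonneg)
    show "\<forall>\<^sub>F n in sequentially. L2_norm M (\<lambda>x. S n x - l x) \<le> L2_norm M (\<lambda>x. S n x - l0 x)"
      unfolding l_def S_def using L2_on_patch[OF Syn_L2_on[OF ctx2 cf_sum[OF FD]] l0 Es] by simp
  qed (use lim0 in auto)
  then show ?thesis using d lL2 unfolding S_def by blast
qed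

end

lemma sum_lessThan_diff_ivl:
  fixes g :: "nat \<Rightarrow> 'b::ab_group_add"
  assumes "n \<le> m"
  shows "(\<Sum>k<m. g k) - (\<Sum>k<n. g k) = (\<Sum>k\<in>{n..<m}. g k)"
  using sum_diff_nat_ivl[of 0 n m g] assms by (simp add: lessThan_atLeast0)

lemma ivl_sum_le_tail:
  fixes c :: "nat \<Rightarrow> real"
  assumes c: "summable (\<lambda>k. (c k)^2)" and nm: "n \<le> m"
  shows "(\<Sum>k\<in>{n..<m}. (c k)^2) \<le> (\<Sum>k. (c (k + n))^2)"
proof -
  have "(\<Sum>k\<in>{n..<m}. (c k)^2) = (\<Sum>k\<in>{0+n..<(m-n)+n}. (c k)^2)" using nm by simp
  also have "\<dots> = (\<Sum>k\<in>{0..<m-n}. (c (k + n))^2)" by (rule sum.shift_bounds_nat_ivl)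
  also have "\<dots> \<le> (\<Sum>k. (c (k + n))^2)"
    using c summable_iff_shift[of "\<lambda>k. (c k)^2" n] by (intro sum_le_suminf) auto
  finally show ?thesis .
qed

context
  fixes M :: "'a measure" and u :: "nat \<Rightarrow> 'a \<Rightarrow> real" and B :: real
  assumes uL2: "\<And>k. u k \<in> L2 M" and Bpos: "B > 0"
    and Bf: "\<And>f. f \<in> L2 M \<Longrightarrow> summable (\<lambda>k. (L2_inner M f (u k))^2) \<and>
               (\<Sum>k. (L2_inner M f (u k))^2) \<le> B * (L2_norm M f)^2"
begin

lemma frame_synth_finite:
  assumes I: "finite I"
  shows "(L2_norm M (\<lambda>x. \<Sum>k\<in>I. c k * u k x))^2 \<le> B * (\<Sum>k\<in>I. (c k)^2)"
proof -
  define g where "g x = (\<Sum>k\<in>I. c k * u k x)" for x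
  have gL2: "g \<in> L2 M" unfolding g_def by (intro L2_sum L2_cmult uL2)
  define N where "N = (L2_norm M g)^2"
  define S where "S = (\<Sum>k\<in>I. (c k)^2)"
  have Nnn: "0 \<le> N" unfolding N_def by simp
  have Snn: "0 \<le> S" unfolding S_def by (intro sum_nonneg) auto
  have "N = L2_inner M g g" unfolding N_def by (simp add: L2_inner_self)
  also have "\<dots> = (\<Sum>k\<in>I. L2_inner M (\<lambda>x. c k * u k x) g)"
  proof -
    have e1: "L2_inner M (\<lambda>x. \<Sum>k\<in>I. c k * u k x) g = (\<Sum>k\<in>I. L2_inner M (\<lambda>x. c k * u k x) g)"
      by (rule L2_inner_sum) (auto intro: L2_cmult uL2 gL2)
    have e0: "(\<lambda>x. \<Sum>k\<in>I. c k * u k x) = g" by (simp add: g_def fun_eq_iff)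
    show ?thesis using e1 unfolding e0 .
  qed
  also have "\<dots> = (\<Sum>k\<in>I. c k * L2_inner M g (u k))"
    unfolding L2_inner_cmult by (simp add: L2_inner_commute)
  finally have Ng: "N = (\<Sum>k\<in>I. c k * L2_inner M g (u k))" .
  have "N^2 \<le> S * (\<Sum>k\<in>I. (L2_inner M g (u k))^2)"
    unfolding Ng S_def by (rule Cauchy_Schwarz_ineq_sum)
  also have "\<dots> \<le> S * (\<Sum>k. (L2_inner M g (u k))^2)"
    using Bf[OF gL2] Snn I by (intro mult_left_mono sum_le_suminf) auto
  also have "\<dots> \<le> S * (B * N)"
    using Bf[OF gL2] Snn unfolding N_def by (intro mult_left_mono) auto
  finally have "N * N \<le> N * (S * B)" by (simp add: power2_eq_square algebra_simps)
  then have "N \<le> S * B" using Nnn by (cases "N = 0") (use Snn Bpos in \<open>auto simp: mult_le_cancel_left\<close>)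
  then show ?thesis unfolding N_def S_def g_def by (simp add: mult.commute)
qed

lemma frame_series:
  assumes c: "summable (\<lambda>k. (c k)^2)"
  shows "\<exists>h. h \<in> L2 M \<and> L2_series_conv M c u h"
proof -
  define P where "P n x = (\<Sum>k<n. c k * u k x)" for n x
  have PL2: "P n \<in> L2 M" for n unfolding P_def by (intro L2_sum L2_cmult uL2)
  define t where "t n = (\<Sum>k. (c (k + n))^2)" for n
  have t0: "t \<longlonglongrightarrow> 0" unfolding t_def by (rule suminf_exist_split2[OF c])
  have tnn: "0 \<le> t n" for n unfolding t_def using c summable_iff_shift[of "\<lambda>k. (c k)^2" n]
    by (intro suminf_nonneg) auto
  have ord: "(L2_norm M (\<lambda>x. P m x - P n x))^2 \<le> B * t n" if nm: "n \<le> m" for m n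
  proof -
    have "(\<lambda>x. P m x - P n x) = (\<lambda>x. \<Sum>k\<in>{n..<m}. c k * u k x)"
      unfolding P_def by (rule ext) (rule sum_lessThan_diff_ivl[OF nm])
    then have "(L2_norm M (\<lambda>x. P m x - P n x))^2 \<le> B * (\<Sum>k\<in>{n..<m}. (c k)^2)"
      using frame_synth_finite[of "{n..<m}" c] by simp
    also have "\<dots> \<le> B * t n" unfolding t_def using Bpos
      by (intro mult_left_mono ivl_sum_le_tail[OF c nm]) auto
    finally show ?thesis .
  qed
  have cauchy: "\<exists>N. \<forall>m\<ge>N. \<forall>n\<ge>N. L2_norm M (\<lambda>x. P m x - P n x) < e" if e: "e > 0" for e
  proof -
    have "(\<lambda>n. B * t n) \<longlonglongrightarrow> B * 0" by (intro tendsto_intros t0)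
    then obtain N where N: "\<And>n. n \<ge> N \<Longrightarrow> B * t n < e^2"
      using e unfolding LIMSEQ_def dist_real_def
      by (metis abs_less_iff diff_zero mult_zero_right zero_less_power)
    show ?thesis
    proof (intro exI allI impI)
      fix m n assume m: "m \<ge> N" and n: "n \<ge> N"
      have "(L2_norm M (\<lambda>x. P m x - P n x))^2 < e^2"
      proof (cases "n \<le> m")
        case True then show ?thesis using ord[OF True] N[OF n] by simp
      next
        case False
        then have "m \<le> n" by simp
        then show ?thesis using ord[of m n] N[OF m] L2_norm_minus_commute[of M "P m" "P n"] by simp
      qed
      then show "L2_norm M (\<lambda>x. P m x - P n x) < e"
        using e L2_norm_nonneg by (simp add: power_less_imp_less_base)
    qed
  qed
  obtain h where h: "h \<in> L2 M" "(\<lambda>n. L2_norm M (\<lambda>x. P n x - h x)) \<longlonglongrightarrow> 0"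
    using L2_complete[OF PL2 cauchy] by blast
  then show ?thesis unfolding L2_series_conv_def P_def by blast
qed

lemma frame_diff_bound:
  assumes h: "L2_series_conv M c u h" and h': "L2_series_conv M c' u h'"
    and s: "summable (\<lambda>k. (c k - c' k)^2)"
  shows "(L2_norm M (\<lambda>x. h x - h' x))^2 \<le> B * (\<Sum>k. (c k - c' k)^2)"
proof -
  define P where "P n x = (\<Sum>k<n. c k * u k x)" for n x
  define P' where "P' n x = (\<Sum>k<n. c' k * u k x)" for n x
  have PL2: "P n \<in> L2 M" "P' n \<in> L2 M" for n unfolding P_def P'_def by (intro L2_sum L2_cmult uL2)+
  have hL2: "h \<in> L2 M" "h' \<in> L2 M" using h h' by (auto simp: L2_series_conv_def)
  have a: "(\<lambda>n. L2_norm M (\<lambda>x. P n x - h x)) \<longlonglongrightarrow> 0" using h by (simp add: L2_series_conv_def P_def)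
  have a': "(\<lambda>n. L2_norm M (\<lambda>x. P' n x - h' x)) \<longlonglongrightarrow> 0" using h' by (simp add: L2_series_conv_def P'_def)
  define S where "S = (\<Sum>k. (c k - c' k)^2)"
  define R where "R = sqrt (B * S)"
  have Snn: "0 \<le> S" unfolding S_def by (intro suminf_nonneg s) auto
  have mid: "L2_norm M (\<lambda>x. P n x - P' n x) \<le> R" for n
  proof -
    have eq: "(\<lambda>x. P n x - P' n x) = (\<lambda>x. \<Sum>k<n. (c k - c' k) * u k x)"
      unfolding P_def P'_def by (simp add: sum_subtractf left_diff_distrib)
    have "(L2_norm M (\<lambda>x. P n x - P' n x))^2 \<le> B * (\<Sum>k<n. (c k - c' k)^2)"
      unfolding eq by (rule frame_synth_finite) simp
    also have "\<dots> \<le> B * S" unfolding S_def using Bpos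
      by (intro mult_left_mono sum_le_suminf s) auto
    finally show ?thesis unfolding R_def by (simp add: real_le_rsqrt)
  qed
  have tri: "L2_norm M (\<lambda>x. h x - h' x) \<le> L2_norm M (\<lambda>x. P n x - h x) + R + L2_norm M (\<lambda>x. P' n x - h' x)" for n
  proof -
    have "L2_norm M (\<lambda>x. h x - h' x) \<le> L2_norm M (\<lambda>x. h x - P n x) + L2_norm M (\<lambda>x. P n x - h' x)"
      by (rule L2_norm_tri[OF hL2(1) PL2(1) hL2(2)])
    also have "L2_norm M (\<lambda>x. P n x - h' x) \<le> L2_norm M (\<lambda>x. P n x - P' n x) + L2_norm M (\<lambda>x. P' n x - h' x)"
      by (rule L2_norm_tri[OF PL2(1) PL2(2) hL2(2)])
    finally show ?thesis using mid[of n] L2_norm_minus_commute[of M h "P n"] by simp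
  qed
  have "(\<lambda>n. L2_norm M (\<lambda>x. P n x - h x) + R + L2_norm M (\<lambda>x. P' n x - h' x)) \<longlonglongrightarrow> 0 + R + 0"
    by (intro tendsto_intros a a')
  then have "L2_norm M (\<lambda>x. h x - h' x) \<le> 0 + R + 0"
    by (rule LIMSEQ_le_const) (use tri in auto)
  then have "(L2_norm M (\<lambda>x. h x - h' x))^2 \<le> R^2"
    by (intro power_mono L2_norm_nonneg) simp
  moreover have "R^2 = B * S" unfolding R_def using Bpos Snn by simp
  ultimately show ?thesis unfolding S_def by simp
qed

end

context
  fixes M :: "'a measure" and E :: "'a set" and C :: real and v :: "nat \<Rightarrow> 'a \<Rightarrow> real"
    and u :: "nat \<Rightarrow> 'a \<Rightarrow> real" and B :: real
  assumes Es: "E \<in> sets M" and Efin: "emeasure M E < \<infinity>"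
    and vL2: "\<And>k. v k \<in> L2 M"
    and vbd: "\<And>x. x \<in> E \<Longrightarrow> summable (\<lambda>k. (v k x)^2) \<and> (\<Sum>k. (v k x)^2) \<le> C^2"
    and uL2: "\<And>k. u k \<in> L2 M" and Bpos: "B > 0"
    and Bf: "\<And>f. f \<in> L2 M \<Longrightarrow> summable (\<lambda>k. (L2_inner M f (u k))^2) \<and>
               (\<Sum>k. (L2_inner M f (u k))^2) \<le> B * (L2_norm M f)^2"
begin

lemmas vctx = Es Efin vL2 vbd
lemmas uctx = uL2 Bpos Bf

lemma inner_bd: "f \<in> L2 M \<Longrightarrow> g \<in> L2 M \<Longrightarrow> \<bar>L2_inner M f g\<bar> \<le> L2_norm M g * L2_norm M f"
  using L2_CS[of f M g] by (simp add: mult.commute)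

lemma part1: "compact_series_op M (L2_on M E) (L2 M) (\<lambda>f k. L2_inner M f (v k)) u"
proof -
  define a where "a f k = L2_inner M f (v k)" for f k
  define T where "T f = (SOME h. h \<in> L2 M \<and> L2_series_conv M (a f) u h)" for f
  have T: "T f \<in> L2 M \<and> L2_series_conv M (a f) u (T f)" if f: "f \<in> L2_on M E" for f
    unfolding T_def
    by (rule someI_ex[OF frame_series[OF uctx bessel_all(1)[OF vctx f, folded a_def]]])
  have compact: "\<exists>r l. strict_mono r \<and> l \<in> L2 M \<and> (\<lambda>n. L2_norm M (\<lambda>x. T (F (r n)) x - l x)) \<longlonglongrightarrow> 0"
    if F: "\<forall>n. F n \<in> L2_on M E \<and> L2_norm M (F n) \<le> B0" for F :: "nat \<Rightarrow> 'a \<Rightarrow> real" and B0 :: real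
  proof -
    have FD: "F n \<in> L2_on M E" and FB: "L2_norm M (F n) \<le> B0" for n using F by auto
    have FL2: "F n \<in> L2 M" for n using FD by (auto simp: L2_on_def)
    have B0: "B0 \<ge> 0" using FB[of 0] L2_norm_nonneg[of M "F 0"] by simp
    have "\<bar>a (F i) k\<bar> \<le> L2_norm M (v k) * B0" for i k
      unfolding a_def using inner_bd[OF FL2[of i] vL2[of k]] mult_left_mono[OF FB[of i] L2_norm_nonneg[of M "v k"]]
      by simp
    then obtain d where d: "strict_mono d" and conv: "\<And>k. convergent (\<lambda>i. a (F (d i)) k)"
      using diag_subseq[of "\<lambda>i k. a (F i) k" "\<lambda>k. L2_norm M (v k) * B0"] by blast
    define S where "S n = T (F (d n))" for n
    have ST: "S n \<in> L2 M \<and> L2_series_conv M (a (F (d n))) u (S n)" for n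
      unfolding S_def by (rule T[OF FD])
    define \<beta> where "\<beta> N = B * ((2 * B0)^2 * (\<integral>x. tl2 E v N x \<partial>M))" for N
    have beta: "\<beta> \<longlonglongrightarrow> 0"
    proof -
      have "\<beta> \<longlonglongrightarrow> B * ((2 * B0)^2 * 0)" unfolding \<beta>_def by (intro tendsto_intros tl2_lim[OF vctx])
      then show ?thesis by simp
    qed
    have bound: "(L2_norm M (\<lambda>x. S m x - S n x))^2 \<le> B *
        (\<Sum>k<N. (a (F (d m)) k - a (F (d n)) k)^2) + \<beta> N" for m n N
    proof -
      define H where "H x = F (d m) x - F (d n) x" for x
      have HD: "H \<in> L2_on M E" unfolding H_def by (rule L2_on_diff[OF FD FD])
      define dd where "dd k = a (F (d m)) k - a (F (d n)) k" for k
      have ddH: "dd k = L2_inner M H (v k)" for k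
        unfolding dd_def a_def H_def by (rule L2_inner_diff[OF FL2 FL2 vL2, symmetric])
      have dds: "summable (\<lambda>k. (dd k)^2)" unfolding ddH by (rule bessel_all(1)[OF vctx HD])
      have "(L2_norm M (\<lambda>x. S m x - S n x))^2 \<le> B * (\<Sum>k. (a (F (d m)) k - a (F (d n)) k)^2)"
        using ST[of m] ST[of n] dds unfolding dd_def by (intro frame_diff_bound[OF uctx]) auto
      also have "(\<Sum>k. (a (F (d m)) k - a (F (d n)) k)^2) = (\<Sum>k. (dd (k + N))^2) + (\<Sum>k<N. (dd k)^2)"
        unfolding dd_def[symmetric] by (rule suminf_split_initial_segment[OF dds])
      also have "(\<Sum>k. (dd (k + N))^2) \<le> (L2_norm M H)^2 * (\<integral>x. tl2 E v N x \<partial>M)"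
        unfolding ddH by (rule bessel_tail(2)[OF vctx HD])
      also have "\<dots> \<le> (2 * B0)^2 * (\<integral>x. tl2 E v N x \<partial>M)"
      proof (rule mult_right_mono)
        show "0 \<le> (\<integral>x. tl2 E v N x \<partial>M)" by (intro integral_nonneg_AE AE_I2 tl2_nonneg[OF vctx])
        have "L2_norm M H \<le> L2_norm M (F (d m)) + L2_norm M (F (d n))"
          unfolding H_def by (rule L2_norm_diff_le[OF FL2 FL2])
        also have "\<dots> \<le> 2 * B0" using FB[of "d m"] FB[of "d n"] by simp
        finally show "(L2_norm M H)^2 \<le> (2 * B0)^2" by (intro power_mono L2_norm_nonneg)
      qed
      finally show ?thesis unfolding \<beta>_def dd_def using Bpos by (simp add: algebra_simps)
    qed
    have cauchy: "\<exists>N. \<forall>m\<ge>N. \<forall>n\<ge>N. L2_norm M (\<lambda>x. S m x - S n x) < e" if e: "e > 0" for e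
    proof -
      obtain N where N: "\<forall>m\<ge>N. \<forall>n\<ge>N. (L2_norm M (\<lambda>x. S m x - S n x))^2 < e^2"
        using cauchy_from_coeffs[OF conv _ bound beta, of "e^2"] e Bpos by auto
      show ?thesis
      proof (intro exI allI impI)
        fix m n assume "m \<ge> N" "n \<ge> N"
        then have "(L2_norm M (\<lambda>x. S m x - S n x))^2 < e^2" using N by auto
        then show "L2_norm M (\<lambda>x. S m x - S n x) < e"
          using e L2_norm_nonneg by (simp add: power_less_imp_less_base)
      qed
    qed
    have SL2: "S n \<in> L2 M" for n using ST by auto
    obtain l where "l \<in> L2 M" "(\<lambda>n. L2_norm M (\<lambda>x. S n x - l x)) \<longlonglongrightarrow> 0"
      using L2_complete[OF SL2 cauchy] by blast
    then show ?thesis using d unfolding S_def by blast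
  qed
  have aeq: "(\<lambda>f k. L2_inner M f (v k)) = a" by (simp add: a_def fun_eq_iff)
  show ?thesis unfolding compact_series_op_def aeq
  proof (intro exI[of _ T] conjI ballI allI impI)
    fix f assume "f \<in> L2_on M E"
    then show "T f \<in> L2 M" "L2_series_conv M (a f) u (T f)" using T by auto
  next
    fix F :: "nat \<Rightarrow> 'a \<Rightarrow> real" and B0 :: real
    assume "\<forall>n. F n \<in> L2_on M E \<and> L2_norm M (F n) \<le> B0"
    then show "\<exists>r l. strict_mono r \<and> l \<in> L2 M \<and> (\<lambda>n. L2_norm M (\<lambda>x. T (F (r n)) x - l x)) \<longlonglongrightarrow> 0"
      by (rule compact)
  qed
qed

lemma weq: "(\<lambda>k x. indicator E x * v k x) = wv E v"
  by (simp add: wv_def fun_eq_iff)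

lemma part2: "compact_series_op M (L2 M) (L2_on M E) (\<lambda>f k. L2_inner M f (u k)) (\<lambda>k x. indicator E x * v k x)"
  unfolding weq compact_series_op_def
proof (intro exI[of _ "\<lambda>f. Syn E v (\<lambda>k. L2_inner M f (u k))"] conjI ballI allI impI)
  fix f assume f: "f \<in> L2 M"
  have s: "summable (\<lambda>k. (L2_inner M f (u k))^2)" using Bf[OF f] by simp
  show "Syn E v (\<lambda>k. L2_inner M f (u k)) \<in> L2_on M E" by (rule Syn_L2_on[OF vctx s])
  show "L2_series_conv M (\<lambda>k. L2_inner M f (u k)) (wv E v) (Syn E v (\<lambda>k. L2_inner M f (u k)))"
    by (rule Syn_conv[OF vctx s])
next
  fix F :: "nat \<Rightarrow> 'a \<Rightarrow> real" and B0 :: real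
  assume F: "\<forall>n. F n \<in> L2 M \<and> L2_norm M (F n) \<le> B0"
  show "\<exists>r l. strict_mono r \<and> l \<in> L2_on M E \<and>
          (\<lambda>n. L2_norm M (\<lambda>x. Syn E v (\<lambda>k. L2_inner M (F (r n)) (u k)) x - l x)) \<longlonglongrightarrow> 0"
  proof (rule Syn_compact[OF vctx, where D="L2 M" and K=B and \<gamma>="\<lambda>k. L2_norm M (u k)"
      and cf="\<lambda>f k. L2_inner M f (u k)" and F=F and B=B0])
    show "L2 M \<subseteq> L2 M" by simp
    show "\<And>f. f \<in> L2 M \<Longrightarrow> summable (\<lambda>k. (L2_inner M f (u k))^2)" using Bf by simp
    show "0 \<le> B" using Bpos by simp
    show "\<And>k. 0 \<le> L2_norm M (u k)" by (rule L2_norm_nonneg)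
    show "\<And>f k. f \<in> L2 M \<Longrightarrow> \<bar>L2_inner M f (u k)\<bar> \<le> L2_norm M (u k) * L2_norm M f"
      by (rule inner_bd[OF _ uL2])
    fix f g assume f: "f \<in> L2 M" and g: "g \<in> L2 M"
    have eqk: "\<And>k. L2_inner M f (u k) - L2_inner M g (u k) = L2_inner M (\<lambda>x. f x - g x) (u k)"
      using L2_inner_diff[OF f g uL2] by simp
    show "(\<Sum>k. (L2_inner M f (u k) - L2_inner M g (u k))^2) \<le> B * (L2_norm M (\<lambda>x. f x - g x))^2"
      using Bf[OF L2_diff[OF f g]] by (simp add: eqk)
  qed (use F in auto)
qed

lemma part3: "compact_series_op M (L2_on M E) (L2_on M E) (\<lambda>f k. L2_inner M f (v k)) (\<lambda>k x. indicator E x * v k x)"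
  unfolding weq compact_series_op_def
proof (intro exI[of _ "\<lambda>f. Syn E v (\<lambda>k. L2_inner M f (v k))"] conjI ballI allI impI)
  fix f assume f: "f \<in> L2_on M E"
  have s: "summable (\<lambda>k. (L2_inner M f (v k))^2)" by (rule bessel_all(1)[OF vctx f])
  show "Syn E v (\<lambda>k. L2_inner M f (v k)) \<in> L2_on M E" by (rule Syn_L2_on[OF vctx s])
  show "L2_series_conv M (\<lambda>k. L2_inner M f (v k)) (wv E v) (Syn E v (\<lambda>k. L2_inner M f (v k)))"
    by (rule Syn_conv[OF vctx s])
next
  fix F :: "nat \<Rightarrow> 'a \<Rightarrow> real" and B0 :: real
  assume F: "\<forall>n. F n \<in> L2_on M E \<and> L2_norm M (F n) \<le> B0"
  show "\<exists>r l. strict_mono r \<and> l \<in> L2_on M E \<and>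
          (\<lambda>n. L2_norm M (\<lambda>x. Syn E v (\<lambda>k. L2_inner M (F (r n)) (v k)) x - l x)) \<longlonglongrightarrow> 0"
  proof (rule Syn_compact[OF vctx, where D="L2_on M E" and K="C^2 * measure M E" and \<gamma>="\<lambda>k. L2_norm M (v k)"
      and cf="\<lambda>f k. L2_inner M f (v k)" and F=F and B=B0])
    show "L2_on M E \<subseteq> L2 M" by (rule L2_on_sub)
    show "\<And>f. f \<in> L2_on M E \<Longrightarrow> summable (\<lambda>k. (L2_inner M f (v k))^2)" by (rule bessel_all(1)[OF vctx])
    show "0 \<le> C^2 * measure M E" by simp
    show "\<And>k. 0 \<le> L2_norm M (v k)" by (rule L2_norm_nonneg)
    show "\<And>f k. f \<in> L2_on M E \<Longrightarrow> \<bar>L2_inner M f (v k)\<bar> \<le> L2_norm M (v k) * L2_norm M f"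
      using L2_on_sub by (intro inner_bd[OF _ vL2]) auto
    fix f g assume f: "f \<in> L2_on M E" and g: "g \<in> L2_on M E"
    have fL2: "f \<in> L2 M" and gL2: "g \<in> L2 M" using f g L2_on_sub by auto
    have eqk: "\<And>k. L2_inner M f (v k) - L2_inner M g (v k) = L2_inner M (\<lambda>x. f x - g x) (v k)"
      using L2_inner_diff[OF fL2 gL2 vL2] by simp
    show "(\<Sum>k. (L2_inner M f (v k) - L2_inner M g (v k))^2) \<le> (C^2 * measure M E) * (L2_norm M (\<lambda>x. f x - g x))^2"
      using bessel_all(2)[OF vctx L2_on_diff[OF f g]] by (simp add: eqk)
  qed (use F in auto)
qed

end

theorem lemma2p3:
  fixes M :: "'a measure" and E :: "'a set" and C :: real
    and v u :: "nat \<Rightarrow> 'a \<Rightarrow> real"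
  assumes E: "E \<in> sets M" "0 < emeasure M E" "emeasure M E < \<infinity>"
    and v: "\<And>k. v k \<in> L2 M"
    and vbd: "\<And>x. x \<in> E \<Longrightarrow> summable (\<lambda>k. (v k x)^2) \<and> (\<Sum>k. (v k x)^2) \<le> C^2"
    and u: "is_frame M u"
  shows "compact_series_op M (L2_on M E) (L2 M) (\<lambda>f k. L2_inner M f (v k)) u
    \<and> compact_series_op M (L2 M) (L2_on M E) (\<lambda>f k. L2_inner M f (u k))
           (\<lambda>k x. indicator E x * v k x)
    \<and> compact_series_op M (L2_on M E) (L2_on M E) (\<lambda>f k. L2_inner M f (v k))
           (\<lambda>k x. indicator E x * v k x)"
proof -
  have fr: "(\<forall>k. u k \<in> L2 M) \<and> (\<exists>A>0. \<exists>B>0. \<forall>f\<in>L2 M. summable (\<lambda>k. (L2_inner M f (u k))^2) \<and>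
        A * (L2_norm M f)^2 \<le> (\<Sum>k. (L2_inner M f (u k))^2) \<and>
        (\<Sum>k. (L2_inner M f (u k))^2) \<le> B * (L2_norm M f)^2)"
    using u unfolding is_frame_def .
  have uL2: "\<And>k. u k \<in> L2 M" using conjunct1[OF fr] by simp
  obtain A B where "A > 0" and Bpos: "B > 0" and H: "\<forall>f\<in>L2 M. summable (\<lambda>k. (L2_inner M f (u k))^2) \<and>
        A * (L2_norm M f)^2 \<le> (\<Sum>k. (L2_inner M f (u k))^2) \<and>
        (\<Sum>k. (L2_inner M f (u k))^2) \<le> B * (L2_norm M f)^2"
    using conjunct2[OF fr] by (elim exE conjE) (rule that; assumption)
  have Bf: "summable (\<lambda>k. (L2_inner M f (u k))^2) \<and>
               (\<Sum>k. (L2_inner M f (u k))^2) \<le> B * (L2_norm M f)^2" if f: "f \<in> L2 M" for f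
    using bspec[OF H f] by (elim conjE) (intro conjI)
  have p1: "compact_series_op M (L2_on M E) (L2 M) (\<lambda>f k. L2_inner M f (v k)) u"
    by (rule part1[OF E(1) E(3) v vbd uL2 Bpos Bf])
  have p2: "compact_series_op M (L2 M) (L2_on M E) (\<lambda>f k. L2_inner M f (u k)) (\<lambda>k x. indicator E x * v k x)"
    by (rule part2[OF E(1) E(3) v vbd uL2 Bpos Bf])
  have p3: "compact_series_op M (L2_on M E) (L2_on M E) (\<lambda>f k. L2_inner M f (v k)) (\<lambda>k x. indicator E x * v k x)"
    by (rule part3[OF E(1) E(3) v vbd uL2 Bpos Bf])
  show ?thesis using p1 p2 p3 by (intro conjI)
qed

end
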